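(* For every integer $n\ge 1$, let $s(n)$ denote the smallest integer $m$ such that for every $n$-state 1gQFA $Q$ over a finite alphabet $\Sigma$ and every strict cutpoint $\lambda\in[0,1)$ there exist a one-way PFA $P$ over $\Sigma$ with at most $m$ states and a strict cutpoint $\mu\in[0,1)$ with $L(P,\mu)=L(Q,\lambda)$. Then $s(n)=\Theta(n^2)$; that is, the worst-case number of probabilistic states required to simulate an $n$-state 1gQFA exactly under strict cutpoint semantics is $\Theta(n^2)$.
   Context: Let $\Sigma$ be a finite alphabet and $\Sigma^\ast$ the set of finite words over it. Probabilistic computations are written with row vectors; stochastic matrices act on the right. A one-way PFA (probabilistic finite automaton, end-marker model) over $\Sigma$ is a tuple $P=(S,\Sigma,\pi,\{P_\sigma\}_{\sigma\in\Sigma},P_{\#},F)$, where $S$ is a finite state set (its number of states is $|S|$), $\pi$ is an initial probability distribution (row vector) on $S$, each $P_\sigma$ and $P_\#$ are row-stochastic $|S|\times|S|$ matrices, and $F\subseteq S$. For $w=\sigma_1\cdots\sigma_m$, $f_P(w)=\pi P_{\sigma_1}\cdots P_{\sigma_m}P_\#\mathbf 1_F$, where $\mathbf 1_F$ is the indicator column vector of $F$. For $\mu\in[0,1)$, $L(P,\mu)=\{w\in\Sigma^\ast: f_P(w)>\mu\}$. An $n$-state 1gQFA (measure-once one-way general quantum finite automaton) over $\Sigma$ is a tuple $Q=(\mathcal H,\Sigma,\rho_0,\{\mathcal E_\sigma\}_{\sigma\in\Sigma},P_{\mathrm{acc}})$ where $\mathcal H\cong\mathbb C^n$, $\rho_0$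 is a density operator on $\mathcal H$, each $\mathcal E_\sigma$ is a completely positive trace-preserving map on the operators on $\mathcal H$, and $P_{\mathrm{acc}}$ is an orthogonal projector on $\mathcal H$. For $w=\sigma_1\cdots\sigma_m$, $\rho_w=\mathcal E_{\sigma_m}\circ\cdots\circ\mathcal E_{\sigma_1}(\rho_0)$ and $f_Q(w)=\operatorname{Tr}(P_{\mathrm{acc}}\rho_w)$. For $\lambda\in[0,1)$, $L(Q,\lambda)=\{w\in\Sigma^\ast: f_Q(w)>\lambda\}$. *)

theory Defs
  imports Complex_Main "HOL-Library.Landau_Symbols"
begin

text \<open>Alphabets are finite sets of natural numbers (every finite
alphabet is in bijection with one).
A machine with k states / a k-dimensional Hilbert space uses the index set
{0..<k}; vectors are functions nat => _ and matrices are functions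
nat => nat => _, of which only the entries with indices below k matter.\<close>

definition stoch_vec :: "nat \<Rightarrow> (nat \<Rightarrow> real) \<Rightarrow> bool" where
  "stoch_vec k v \<longleftrightarrow> (\<forall>i<k. 0 \<le> v i) \<and> (\<Sum>i<k. v i) = 1"

definition stoch_mat :: "nat \<Rightarrow> (nat \<Rightarrow> nat \<Rightarrow> real) \<Rightarrow> bool" where
  "stoch_mat k M \<longleftrightarrow> (\<forall>i<k. stoch_vec k (M i))"

definition vec_mat :: "nat \<Rightarrow> (nat \<Rightarrow> real) \<Rightarrow> (nat \<Rightarrow> nat \<Rightarrow> real) \<Rightarrow> nat \<Rightarrow> real" where
  "vec_mat k v M = (\<lambda>j. \<Sum>i<k. v i * M i j)"

definition is_pfa :: "nat \<Rightarrow> nat set \<Rightarrow> (nat \<Rightarrow> real) \<Rightarrow> (nat \<Rightarrow> nat \<Rightarrow> nat \<Rightarrow> real)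
    \<Rightarrow> (nat \<Rightarrow> nat \<Rightarrow> real) \<Rightarrow> nat set \<Rightarrow> bool" where
  "is_pfa k Alph ini T Te F \<longleftrightarrow>
     stoch_vec k ini \<and> (\<forall>\<sigma>\<in>Alph. stoch_mat k (T \<sigma>)) \<and> stoch_mat k Te \<and> F \<subseteq> {..<k}"

definition pfa_prob :: "nat \<Rightarrow> (nat \<Rightarrow> real) \<Rightarrow> (nat \<Rightarrow> nat \<Rightarrow> nat \<Rightarrow> real)
    \<Rightarrow> (nat \<Rightarrow> nat \<Rightarrow> real) \<Rightarrow> nat set \<Rightarrow> nat list \<Rightarrow> real" where
  "pfa_prob k ini T Te F w =
     (let v = vec_mat k (foldl (\<lambda>u \<sigma>. vec_mat k u (T \<sigma>)) ini w) Te in \<Sum>j\<in>F. v j)"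

definition pfa_lang :: "nat \<Rightarrow> nat set \<Rightarrow> (nat \<Rightarrow> real) \<Rightarrow> (nat \<Rightarrow> nat \<Rightarrow> nat \<Rightarrow> real)
    \<Rightarrow> (nat \<Rightarrow> nat \<Rightarrow> real) \<Rightarrow> nat set \<Rightarrow> real \<Rightarrow> nat list set" where
  "pfa_lang k Alph ini T Te F \<mu> = {w. set w \<subseteq> Alph \<and> pfa_prob k ini T Te F w > \<mu>}"

type_synonym cmat = "nat \<Rightarrow> nat \<Rightarrow> complex"

definition mat_eq :: "nat \<Rightarrow> cmat \<Rightarrow> cmat \<Rightarrow> bool" where
  "mat_eq n A B \<longleftrightarrow> (\<forall>i<n. \<forall>j<n. A i j = B i j)"

definition cmat_mult :: "nat \<Rightarrow> cmat \<Rightarrow> cmat \<Rightarrow> cmat" where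
  "cmat_mult n A B = (\<lambda>i j. \<Sum>l<n. A i l * B l j)"

definition ctrace :: "nat \<Rightarrow> cmat \<Rightarrow> complex" where
  "ctrace n A = (\<Sum>i<n. A i i)"

definition hermitian :: "nat \<Rightarrow> cmat \<Rightarrow> bool" where
  "hermitian n A \<longleftrightarrow> (\<forall>i<n. \<forall>j<n. A i j = cnj (A j i))"

definition psd :: "nat \<Rightarrow> cmat \<Rightarrow> bool" where
  "psd n A \<longleftrightarrow> (\<forall>x :: nat \<Rightarrow> complex.
      let q = (\<Sum>i<n. \<Sum>j<n. cnj (x i) * A i j * x j) in Im q = 0 \<and> 0 \<le> Re q)"

definition density :: "nat \<Rightarrow> cmat \<Rightarrow> bool" where
  "density n \<rho> \<longleftrightarrow> psd n \<rho> \<and> ctrace n \<rho> = 1"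

definition projector :: "nat \<Rightarrow> cmat \<Rightarrow> bool" where
  "projector n P \<longleftrightarrow> hermitian n P \<and> mat_eq n (cmat_mult n P P) P"

text \<open>The ampliation id_m (x) E acting on an (m*n)x(m*n) matrix, where index
a corresponds to the pair (a div n, a mod n) in {0..<m} x {0..<n}.\<close>
definition ampl :: "nat \<Rightarrow> (cmat \<Rightarrow> cmat) \<Rightarrow> cmat \<Rightarrow> cmat" where
  "ampl n E X = (\<lambda>a b. E (\<lambda>i j. X ((a div n) * n + i) ((b div n) * n + j)) (a mod n) (b mod n))"

definition cptp :: "nat \<Rightarrow> (cmat \<Rightarrow> cmat) \<Rightarrow> bool" where
  "cptp n E \<longleftrightarrow>
     (\<forall>A B. mat_eq n A B \<longrightarrow> mat_eq n (E A) (E B)) \<and>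
     (\<forall>c A B. mat_eq n (E (\<lambda>i j. c * A i j + B i j)) (\<lambda>i j. c * E A i j + E B i j)) \<and>
     (\<forall>m X. psd (m * n) X \<longrightarrow> psd (m * n) (ampl n E X)) \<and>
     (\<forall>A. ctrace n (E A) = ctrace n A)"

definition is_gqfa :: "nat \<Rightarrow> nat set \<Rightarrow> cmat \<Rightarrow> (nat \<Rightarrow> cmat \<Rightarrow> cmat) \<Rightarrow> cmat \<Rightarrow> bool" where
  "is_gqfa n Alph \<rho>0 E Pacc \<longleftrightarrow>
     density n \<rho>0 \<and> (\<forall>\<sigma>\<in>Alph. cptp n (E \<sigma>)) \<and> projector n Pacc"

definition gqfa_prob :: "nat \<Rightarrow> cmat \<Rightarrow> (nat \<Rightarrow> cmat \<Rightarrow> cmat) \<Rightarrow> cmat \<Rightarrow> nat list \<Rightarrow> real" where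
  "gqfa_prob n \<rho>0 E Pacc w =
     Re (ctrace n (cmat_mult n Pacc (foldl (\<lambda>\<rho> \<sigma>. E \<sigma> \<rho>) \<rho>0 w)))"

definition gqfa_lang :: "nat \<Rightarrow> nat set \<Rightarrow> cmat \<Rightarrow> (nat \<Rightarrow> cmat \<Rightarrow> cmat) \<Rightarrow> cmat \<Rightarrow> real \<Rightarrow> nat list set" where
  "gqfa_lang n Alph \<rho>0 E Pacc lam = {w. set w \<subseteq> Alph \<and> gqfa_prob n \<rho>0 E Pacc w > lam}"

definition simulates_all :: "nat \<Rightarrow> nat \<Rightarrow> bool" where
  "simulates_all n m \<longleftrightarrow>
     (\<forall>Alph \<rho>0 E Pacc lam. finite Alph \<and> is_gqfa n Alph \<rho>0 E Pacc \<and> 0 \<le> lam \<and> lam < 1 \<longrightarrow>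
        (\<exists>k ini T Te F \<mu>. k \<le> m \<and> is_pfa k Alph ini T Te F \<and> 0 \<le> \<mu> \<and> \<mu> < 1 \<and>
            pfa_lang k Alph ini T Te F \<mu> = gqfa_lang n Alph \<rho>0 E Pacc lam))"

definition s_cost :: "nat \<Rightarrow> nat" where
  "s_cost n = (LEAST m. simulates_all n m)"

end

theory Submission
  imports Defs
begin

definition tB :: "nat \<Rightarrow> (nat\<Rightarrow>nat\<Rightarrow>real) \<Rightarrow> nat \<Rightarrow> nat \<Rightarrow> real" where
 "tB d M i j = (if i < d \<and> j < d then M i j
   else if i < d \<and> j = d then - (\<Sum>l<d. M i l)
   else if i = Suc d \<and> j < d then - (\<Sum>l<d. M l j)
   else if i = Suc d \<and> j = d then (\<Sum>l<d. \<Sum>m<d. M l m)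
   else 0)"

lemma sum_split2: "(\<Sum>j<Suc (Suc d). f j) = (\<Sum>j<d. f j) + f d + f (Suc d)"
  by simp

lemma tB_row: "(\<Sum>j<Suc (Suc d). tB d M i j) = 0"
proof -
  consider "i < d" | "i = d" | "i = Suc d" | "i > Suc d" by linarith
  then show ?thesis
  proof cases
    case 1
    have "(\<Sum>j<d. tB d M i j) = (\<Sum>j<d. M i j)" by (rule sum.cong) (auto simp: tB_def 1)
    then show ?thesis using 1 by (simp add: tB_def)
  next
    case 2 then show ?thesis by (simp add: tB_def)
  next
    case 3
    have "(\<Sum>j<d. tB d M i j) = (\<Sum>j<d. - (\<Sum>l<d. M l j))" by (rule sum.cong) (auto simp: tB_def 3)
    moreover have "(\<Sum>j<d. - (\<Sum>l<d. M l j)) = - (\<Sum>l<d. \<Sum>m<d. M l m)"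
      by (simp add: sum_negf sum.swap[of "\<lambda>j l. M l j"])
    ultimately show ?thesis using 3 by (simp add: tB_def)
  next
    case 4 then show ?thesis by (simp add: tB_def)
  qed
qed

lemma tB_col: "(\<Sum>i<Suc (Suc d). tB d M i j) = 0"
proof -
  consider "j < d" | "j = d" | "j = Suc d" | "j > Suc d" by linarith
  then show ?thesis
  proof cases
    case 1
    have "(\<Sum>i<d. tB d M i j) = (\<Sum>i<d. M i j)" by (rule sum.cong) (auto simp: tB_def 1)
    then show ?thesis using 1 by (simp add: tB_def)
  next
    case 2
    have "(\<Sum>i<d. tB d M i j) = (\<Sum>i<d. - (\<Sum>l<d. M i l))" by (rule sum.cong) (auto simp: tB_def 2)
    then show ?thesis using 2 by (simp add: tB_def sum_negf)
  next
    case 3 then show ?thesis by (simp add: tB_def)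
  next
    case 4 then show ?thesis by (simp add: tB_def)
  qed
qed


definition vstep :: "nat \<Rightarrow> (nat \<Rightarrow> nat \<Rightarrow> nat \<Rightarrow> real) \<Rightarrow> (nat \<Rightarrow> real) \<Rightarrow> nat \<Rightarrow> nat \<Rightarrow> real" where
  "vstep k T u \<sigma> = vec_mat k u (T \<sigma>)"

lemma vec_mat_cong: "(\<And>i. i < k \<Longrightarrow> u i = v i) \<Longrightarrow> vec_mat k u M = vec_mat k v M"
  unfolding vec_mat_def by (auto intro!: sum.cong)

lemma vec_mat_tB_sum:
  "(\<Sum>j<Suc (Suc d). vec_mat (Suc (Suc d)) y (tB d M) j) = 0"
proof -
  have "(\<Sum>j<Suc (Suc d). vec_mat (Suc (Suc d)) y (tB d M) j)
      = (\<Sum>i<Suc (Suc d). y i * (\<Sum>j<Suc (Suc d). tB d M i j))"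
    unfolding vec_mat_def sum_distrib_left by (rule sum.swap)
  also have "\<dots> = 0" by (simp add: tB_row del: sum.lessThan_Suc)
  finally show ?thesis .
qed

lemma vec_mat_tB_mid:
  assumes "y (Suc d) = 0" "s < d"
  shows "vec_mat (Suc (Suc d)) y (tB d M) s = vec_mat d y M s"
proof -
  have "vec_mat (Suc (Suc d)) y (tB d M) s = (\<Sum>i<d. y i * tB d M i s) + y d * tB d M d s + y (Suc d) * tB d M (Suc d) s"
    unfolding vec_mat_def by simp
  also have "\<dots> = (\<Sum>i<d. y i * M i s)"
    using assms by (auto simp: tB_def intro!: sum.cong)
  finally show ?thesis unfolding vec_mat_def .
qed

lemma vec_mat_tB_last:
  shows "vec_mat (Suc (Suc d)) y (tB d M) (Suc d) = 0"
  unfolding vec_mat_def by (auto simp: tB_def intro!: sum.neutral)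

lemma fold_B_sum:
  "(\<Sum>i<Suc (Suc d). y i) = 0 \<Longrightarrow>
   (\<Sum>i<Suc (Suc d). foldl (vstep (Suc (Suc d)) (\<lambda>\<sigma>. tB d (A \<sigma>))) y w i) = 0"
proof (induction w arbitrary: y)
  case Nil then show ?case by simp
next
  case (Cons a w)
  have "(\<Sum>i<Suc (Suc d). vstep (Suc (Suc d)) (\<lambda>\<sigma>. tB d (A \<sigma>)) y a i) = 0"
    by (simp only: vstep_def vec_mat_tB_sum)
  from Cons.IH[OF this] show ?case by simp
qed

lemma fold_B_mid:
  "y (Suc d) = 0 \<Longrightarrow> (\<forall>s<d. y s = z s) \<Longrightarrow>
   foldl (vstep (Suc (Suc d)) (\<lambda>\<sigma>. tB d (A \<sigma>))) y w (Suc d) = 0 \<and>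
   (\<forall>s<d. foldl (vstep (Suc (Suc d)) (\<lambda>\<sigma>. tB d (A \<sigma>))) y w s = foldl (vstep d A) z w s)"
proof (induction w arbitrary: y z)
  case Nil then show ?case by simp
next
  case (Cons a w)
  have h1: "vstep (Suc (Suc d)) (\<lambda>\<sigma>. tB d (A \<sigma>)) y a (Suc d) = 0"
    by (simp add: vstep_def vec_mat_tB_last)
  have h2: "\<forall>s<d. vstep (Suc (Suc d)) (\<lambda>\<sigma>. tB d (A \<sigma>)) y a s = vstep d A z a s"
  proof (intro allI impI)
    fix s assume "s < d"
    then have "vstep (Suc (Suc d)) (\<lambda>\<sigma>. tB d (A \<sigma>)) y a s = vec_mat d y (A a) s"
      using Cons.prems by (simp add: vstep_def vec_mat_tB_mid)
    also have "\<dots> = vec_mat d z (A a) s" using vec_mat_cong[of d y z "A a"] Cons.prems(2) by auto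
    finally show "vstep (Suc (Suc d)) (\<lambda>\<sigma>. tB d (A \<sigma>)) y a s = vstep d A z a s"
      by (simp add: vstep_def)
  qed
  show ?case using Cons.IH[OF h1 h2] by simp
qed

lemma step_C:
  fixes a :: real
  assumes "(\<Sum>i<Suc (Suc d). y i) = 0" "a = 1 / real (Suc (Suc d))"
  shows "vec_mat (Suc (Suc d)) (\<lambda>j. a + c * y j) (\<lambda>i j. e * tB d M i j + a)
       = (\<lambda>j. a + (c * e) * vec_mat (Suc (Suc d)) y (tB d M) j)"
proof
  fix j
  let ?D = "Suc (Suc d)"
  have "vec_mat ?D (\<lambda>j. a + c * y j) (\<lambda>i j. e * tB d M i j + a) j
     = (\<Sum>i<?D. a * e * tB d M i j + a * a + c * e * (y i * tB d M i j) + c * a * y i)"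
    unfolding vec_mat_def by (rule sum.cong) (simp_all add: distrib_left distrib_right mult.assoc mult.left_commute)
  also have "\<dots> = a * e * (\<Sum>i<?D. tB d M i j) + real ?D * (a * a) + c * e * (\<Sum>i<?D. y i * tB d M i j) + c * a * (\<Sum>i<?D. y i)"
    by (simp add: sum.distrib sum_distrib_left del: sum.lessThan_Suc)
  also have "\<dots> = real ?D * (a * a) + c * e * vec_mat ?D y (tB d M) j"
    using assms(1) unfolding vec_mat_def by (simp only: tB_col; simp)
  also have "\<dots> = a + c * e * vec_mat ?D y (tB d M) j"
  proof -
    have "real ?D * a = 1" unfolding assms(2) by simp
    then have "real ?D * (a * a) = a" by (metis mult.assoc mult_1)
    then show ?thesis by simp
  qed
  finally show "vec_mat ?D (\<lambda>j. a + c * y j) (\<lambda>i j. e * tB d M i j + a) j = a + c * e * vec_mat ?D y (tB d M) j" .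
qed

lemma fold_C:
  assumes "a = 1 / real (Suc (Suc d))"
  shows "(\<Sum>i<Suc (Suc d). y i) = 0 \<Longrightarrow>
   foldl (vstep (Suc (Suc d)) (\<lambda>\<sigma> i j. e * tB d (A \<sigma>) i j + a)) (\<lambda>j. a + c * y j) w
   = (\<lambda>j. a + (c * e ^ length w) * foldl (vstep (Suc (Suc d)) (\<lambda>\<sigma>. tB d (A \<sigma>))) y w j)"
proof (induction w arbitrary: c y)
  case Nil then show ?case by simp
next
  case (Cons b w)
  have s: "vstep (Suc (Suc d)) (\<lambda>\<sigma> i j. e * tB d (A \<sigma>) i j + a) (\<lambda>j. a + c * y j) b
     = (\<lambda>j. a + (c * e) * vstep (Suc (Suc d)) (\<lambda>\<sigma>. tB d (A \<sigma>)) y b j)"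
    unfolding vstep_def by (rule step_C[OF Cons.prems assms])
  have z: "(\<Sum>i<Suc (Suc d). vstep (Suc (Suc d)) (\<lambda>\<sigma>. tB d (A \<sigma>)) y b i) = 0"
    by (simp only: vstep_def vec_mat_tB_sum)
  have "foldl (vstep (Suc (Suc d)) (\<lambda>\<sigma> i j. e * tB d (A \<sigma>) i j + a)) (\<lambda>j. a + c * y j) (b # w)
     = foldl (vstep (Suc (Suc d)) (\<lambda>\<sigma> i j. e * tB d (A \<sigma>) i j + a))
         (\<lambda>j. a + (c * e) * vstep (Suc (Suc d)) (\<lambda>\<sigma>. tB d (A \<sigma>)) y b j) w"
    by (simp only: foldl_Cons s)
  also have "\<dots> = (\<lambda>j. a + (c * e * e ^ length w) * foldl (vstep (Suc (Suc d)) (\<lambda>\<sigma>. tB d (A \<sigma>))) (vstep (Suc (Suc d)) (\<lambda>\<sigma>. tB d (A \<sigma>)) y b) w j)"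
    by (rule Cons.IH[OF z])
  finally show ?case by (simp add: mult.assoc)
qed


lemma abs_le_sum3:
  fixes f :: "'a \<Rightarrow> nat \<Rightarrow> nat \<Rightarrow> real"
  assumes "finite S" "s \<in> S" "i < D" "j < D"
  shows "\<bar>f s i j\<bar> \<le> (\<Sum>s\<in>S. \<Sum>i<D. \<Sum>j<D. \<bar>f s i j\<bar>)"
proof -
  have "\<bar>f s i j\<bar> \<le> (\<Sum>j<D. \<bar>f s i j\<bar>)"
    by (rule member_le_sum[where f="\<lambda>j. \<bar>f s i j\<bar>"]) (use assms in auto)
  also have "\<dots> \<le> (\<Sum>i<D. \<Sum>j<D. \<bar>f s i j\<bar>)"
    by (rule member_le_sum[where f="\<lambda>i. \<Sum>j<D. \<bar>f s i j\<bar>"]) (use assms in \<open>auto intro: sum_nonneg\<close>)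
  also have "\<dots> \<le> (\<Sum>s\<in>S. \<Sum>i<D. \<Sum>j<D. \<bar>f s i j\<bar>)"
    by (rule member_le_sum[where f="\<lambda>s. \<Sum>i<D. \<Sum>j<D. \<bar>f s i j\<bar>"]) (use assms in \<open>auto intro: sum_nonneg\<close>)
  finally show ?thesis .
qed

lemma abs_le_sum1:
  fixes f :: "nat \<Rightarrow> real"
  assumes "i < D"
  shows "\<bar>f i\<bar> \<le> (\<Sum>i<D. \<bar>f i\<bar>)"
  by (rule member_le_sum[where f="\<lambda>i. \<bar>f i\<bar>"]) (use assms in auto)

lemma foldl_vstep_eq: "foldl (\<lambda>u \<sigma>. vec_mat k u (T \<sigma>)) = foldl (vstep k T)"
proof -
  have "(\<lambda>u \<sigma>. vec_mat k u (T \<sigma>)) = vstep k T" by (intro ext) (simp add: vstep_def)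
  then show ?thesis by simp
qed

lemma turakainen:
  assumes fin: "finite Alph"
  shows "\<exists>ini T Te F \<mu>. is_pfa (Suc (Suc d)) Alph ini T Te F \<and> 0 \<le> \<mu> \<and> \<mu> < 1 \<and>
     (\<forall>w. pfa_prob (Suc (Suc d)) ini T Te F w > \<mu> \<longleftrightarrow> (\<Sum>s<d. foldl (vstep d A) x0 w s * \<eta> s) > 0)"
proof -
  define D where "D = Suc (Suc d)"
  define a :: real where "a = 1 / real D"
  have a_pos: "a > 0" by (simp add: a_def D_def)
  have Da: "real D * a = 1" by (simp add: a_def D_def)
  define xp where "xp j = (if j < d then x0 j else if j = d then - (\<Sum>i<d. x0 i) else 0)" for j
  have xp_sum: "(\<Sum>i<D. xp i) = 0"
  proof -
    have h0: "(\<Sum>i<d. xp i) = (\<Sum>i<d. x0 i)" by (rule sum.cong) (simp_all add: xp_def)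
    have h1: "xp d = - (\<Sum>i<d. x0 i)" "xp (Suc d) = 0" by (simp_all add: xp_def)
    show ?thesis unfolding D_def by (simp only: sum.lessThan_Suc h0 h1; simp)
  qed
  define Sx where "Sx = 1 + (\<Sum>i<D. \<bar>xp i\<bar>)"
  have Sx_pos: "Sx > 0" unfolding Sx_def by (intro add_pos_nonneg sum_nonneg) auto
  define \<delta> where "\<delta> = a / Sx"
  have \<delta>_pos: "\<delta> > 0" using a_pos Sx_pos by (simp add: \<delta>_def)
  define ini where "ini j = a + \<delta> * xp j" for j
  define SB where "SB = 1 + (\<Sum>s\<in>Alph. \<Sum>i<D. \<Sum>j<D. \<bar>tB d (A s) i j\<bar>)"
  have SB_pos: "SB > 0" unfolding SB_def by (intro add_pos_nonneg sum_nonneg) auto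
  define \<epsilon> where "\<epsilon> = a / SB"
  have \<epsilon>_pos: "\<epsilon> > 0" using a_pos SB_pos by (simp add: \<epsilon>_def)
  define T where "T = (\<lambda>s i j. \<epsilon> * tB d (A s) i j + a)"
  define S\<eta> where "S\<eta> = 1 + (\<Sum>i<d. \<bar>\<eta> i\<bar>)"
  have S\<eta>_pos: "S\<eta> > 0" unfolding S\<eta>_def by (intro add_pos_nonneg sum_nonneg) auto
  define \<theta> where "\<theta> = 1 / (2 * S\<eta>)"
  have \<theta>_pos: "\<theta> > 0" using S\<eta>_pos by (simp add: \<theta>_def)
  define \<eta>' where "\<eta>' i = (if i < d then \<eta> i else 0)" for i
  define h where "h i = 1/2 + \<theta> * \<eta>' i" for i
  have h_bnd: "0 \<le> h i \<and> h i < 1" for i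
  proof -
    have "\<bar>\<eta>' i\<bar> < S\<eta>"
    proof (cases "i < d")
      case True
      then have "\<bar>\<eta> i\<bar> \<le> (\<Sum>i<d. \<bar>\<eta> i\<bar>)" by (rule abs_le_sum1)
      then show ?thesis using True by (simp add: \<eta>'_def S\<eta>_def)
    next
      case False then show ?thesis using S\<eta>_pos by (simp add: \<eta>'_def)
    qed
    then have "\<theta> * \<bar>\<eta>' i\<bar> < 1/2" using S\<eta>_pos by (simp add: \<theta>_def field_simps)
    then have "\<bar>\<theta> * \<eta>' i\<bar> < 1/2" using \<theta>_pos by (simp add: abs_mult)
    then show ?thesis unfolding h_def by linarith
  qed
  define Te where "Te i j = (if j = d then h i else if j = Suc d then 1 - h i else 0)" for i j
  define \<mu> where "\<mu> = a * (\<Sum>i<D. h i)"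
  have \<mu>_bnd: "0 \<le> \<mu> \<and> \<mu> < 1"
  proof -
    have "(\<Sum>i<D. h i) < (\<Sum>i<D. 1)" by (rule sum_strict_mono) (use h_bnd in \<open>auto simp: D_def\<close>)
    then have "(\<Sum>i<D. h i) < real D" by simp
    moreover have "0 \<le> (\<Sum>i<D. h i)" using h_bnd by (simp add: sum_nonneg)
    ultimately have "a * (\<Sum>i<D. h i) < a * real D" "0 \<le> a * (\<Sum>i<D. h i)"
      using a_pos by (simp_all add: mult_strict_left_mono)
    then show ?thesis using Da unfolding \<mu>_def by (simp add: mult.commute)
  qed
  have pfa: "is_pfa D Alph ini T Te {d}"
  proof -
    have "stoch_vec D ini"
    proof -
      have "0 \<le> ini j" if "j < D" for j
      proof -
        have "\<bar>xp j\<bar> < Sx" using abs_le_sum1[OF that, of xp] by (simp add: Sx_def)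
        then have "\<delta> * \<bar>xp j\<bar> < a" using a_pos Sx_pos by (simp add: \<delta>_def field_simps)
        then have "\<bar>\<delta> * xp j\<bar> < a" using \<delta>_pos by (simp add: abs_mult)
        then show ?thesis unfolding ini_def by linarith
      qed
      moreover have "(\<Sum>i<D. ini i) = 1"
        unfolding ini_def using xp_sum Da by (simp add: sum.distrib sum_distrib_left[symmetric])
      ultimately show ?thesis by (simp add: stoch_vec_def)
    qed
    moreover have "stoch_mat D (T s)" if "s \<in> Alph" for s
      unfolding stoch_mat_def stoch_vec_def
    proof (intro allI impI conjI)
      fix i j assume "i < D" "j < D"
      have "\<bar>tB d (A s) i j\<bar> < SB"
        using abs_le_sum3[OF fin that \<open>i < D\<close> \<open>j < D\<close>, of "\<lambda>s. tB d (A s)"] by (simp add: SB_def)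
      then have "\<epsilon> * \<bar>tB d (A s) i j\<bar> < a" using a_pos SB_pos by (simp add: \<epsilon>_def field_simps)
      then have "\<bar>\<epsilon> * tB d (A s) i j\<bar> < a" using \<epsilon>_pos by (simp add: abs_mult)
      then show "0 \<le> T s i j" unfolding T_def by linarith
    next
      fix i assume "i < D"
      have "(\<Sum>j<D. T s i j) = \<epsilon> * (\<Sum>j<D. tB d (A s) i j) + real D * a"
        unfolding T_def by (simp add: sum.distrib sum_distrib_left)
      also have "\<dots> = 1" using Da unfolding D_def by (simp only: tB_row; simp)
      finally show "(\<Sum>j<D. T s i j) = 1" .
    qed
    moreover have "stoch_mat D Te"
      unfolding stoch_mat_def stoch_vec_def
    proof (intro allI impI conjI)
      fix i j assume "i < D" "j < D"
      show "0 \<le> Te i j" using h_bnd[of i] by (simp add: Te_def)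
    next
      fix i assume "i < D"
      have h0: "(\<Sum>j<d. Te i j) = 0" by (rule sum.neutral) (simp add: Te_def)
      have h1: "Te i d = h i" "Te i (Suc d) = 1 - h i" by (simp_all add: Te_def)
      show "(\<Sum>j<D. Te i j) = 1" unfolding D_def by (simp only: sum.lessThan_Suc h0 h1; simp)
    qed
    moreover have "{d} \<subseteq> {..<D}" by (simp add: D_def)
    ultimately show ?thesis by (simp add: is_pfa_def)
  qed
  have key: "pfa_prob D ini T Te {d} w = \<mu> + (\<delta> * \<epsilon> ^ length w * \<theta>) * (\<Sum>s<d. foldl (vstep d A) x0 w s * \<eta> s)" for w
  proof -
    define y where "y = foldl (vstep D (\<lambda>s. tB d (A s))) xp w"
    define c where "c = \<delta> * \<epsilon> ^ length w"
    have ini_eq: "ini = (\<lambda>j. a + \<delta> * xp j)" by (simp add: ini_def fun_eq_iff)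
    have fC: "foldl (vstep D T) ini w = (\<lambda>j. a + c * y j)"
      unfolding T_def ini_eq y_def c_def D_def
      by (rule fold_C) (use xp_sum a_def in \<open>simp_all add: D_def\<close>)
    have ysum: "(\<Sum>i<D. y i) = 0" unfolding y_def D_def by (rule fold_B_sum) (use xp_sum in \<open>simp add: D_def\<close>)
    have ymid: "y (Suc d) = 0 \<and> (\<forall>s<d. y s = foldl (vstep d A) x0 w s)"
      unfolding y_def D_def by (rule fold_B_mid) (simp_all add: xp_def)
    have "pfa_prob D ini T Te {d} w = vec_mat D (foldl (vstep D T) ini w) Te d"
      by (simp add: pfa_prob_def foldl_vstep_eq)
    also have "\<dots> = (\<Sum>i<D. (a + c * y i) * h i)"
      by (simp add: fC vec_mat_def Te_def)
    also have "\<dots> = a * (\<Sum>i<D. h i) + c * (\<Sum>i<D. y i * h i)"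
      by (simp add: algebra_simps sum.distrib sum_distrib_left)
    also have "(\<Sum>i<D. y i * h i) = (1/2) * (\<Sum>i<D. y i) + \<theta> * (\<Sum>i<D. y i * \<eta>' i)"
      by (simp add: h_def algebra_simps sum.distrib sum_distrib_left)
    also have "(\<Sum>i<D. y i * \<eta>' i) = (\<Sum>i<d. y i * \<eta> i)"
      by (simp add: D_def \<eta>'_def)
    also have "(\<Sum>i<d. y i * \<eta> i) = (\<Sum>s<d. foldl (vstep d A) x0 w s * \<eta> s)"
      using ymid by (intro sum.cong) auto
    finally show ?thesis using ysum by (simp add: \<mu>_def c_def)
  qed
  have "\<forall>w. pfa_prob D ini T Te {d} w > \<mu> \<longleftrightarrow> (\<Sum>s<d. foldl (vstep d A) x0 w s * \<eta> s) > 0"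
  proof
    fix w :: "nat list"
    define C where "C = \<delta> * \<epsilon> ^ length w * \<theta>"
    have "C > 0" using \<delta>_pos \<epsilon>_pos \<theta>_pos by (simp add: C_def)
    then show "pfa_prob D ini T Te {d} w > \<mu> \<longleftrightarrow> (\<Sum>s<d. foldl (vstep d A) x0 w s * \<eta> s) > 0"
      unfolding key C_def[symmetric] by (simp add: zero_less_mult_iff)
  qed
  then show ?thesis using pfa \<mu>_bnd unfolding D_def by blast
qed


definition enc :: "nat \<Rightarrow> cmat \<Rightarrow> nat \<Rightarrow> real" where
  "enc n X r = (if even r then Re (X ((r div 2) div n) ((r div 2) mod n))
                else Im (X ((r div 2) div n) ((r div 2) mod n)))"

definition bas :: "nat \<Rightarrow> nat \<Rightarrow> cmat" where
  "bas n r = (\<lambda>i j. if i = (r div 2) div n \<and> j = (r div 2) mod n then (if even r then 1 else \<i>) else 0)"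

lemma div2_cases: "(r::nat) div 2 = c \<longleftrightarrow> r = 2 * c \<or> r = 2 * c + 1"
  by presburger

lemma expand_term:
  assumes "i < n" "j < n"
  shows "complex_of_real (enc n X r) * bas n r i j
       = (if r = 2 * (i * n + j) then complex_of_real (Re (X i j)) else 0)
       + (if r = 2 * (i * n + j) + 1 then complex_of_real (Im (X i j)) * \<i> else 0)"
proof -
  have eq: "(i = (r div 2) div n \<and> j = (r div 2) mod n) \<longleftrightarrow> r div 2 = i * n + j"
  proof
    assume "i = (r div 2) div n \<and> j = (r div 2) mod n"
    then show "r div 2 = i * n + j" by (metis div_mult_mod_eq)
  next
    assume "r div 2 = i * n + j"
    then show "i = (r div 2) div n \<and> j = (r div 2) mod n" using assms by simp
  qed
  show ?thesis
  proof (cases "r div 2 = i * n + j")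
    case True
    then have r: "r = 2 * (i * n + j) \<or> r = 2 * (i * n + j) + 1" by auto
    then show ?thesis
    proof
      assume r0: "r = 2 * (i * n + j)"
      then show ?thesis using assms by (simp add: enc_def bas_def)
    next
      assume r1: "r = 2 * (i * n + j) + 1"
      then show ?thesis using assms by (simp add: enc_def bas_def)
    qed
  next
    case False
    then have "r \<noteq> 2 * (i * n + j)" "r \<noteq> 2 * (i * n + j) + 1" by auto
    moreover have "\<not> (i = (r div 2) div n \<and> j = (r div 2) mod n)" using False eq by blast
    then have "bas n r i j = 0" unfolding bas_def by auto
    ultimately show ?thesis by simp
  qed
qed

lemma ij_bound:
  fixes i j n :: nat
  assumes "i < n" "j < n"
  shows "2 * (i * n + j) + 1 < 2 * (n * n)"
proof -
  have "i * n + j < n * n"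
  proof -
    have "i * n + j < i * n + n" using assms(2) by linarith
    also have "\<dots> = (i + 1) * n" by simp
    also have "\<dots> \<le> n * n" using assms by (intro mult_right_mono) auto
    finally show ?thesis .
  qed
  then show ?thesis by simp
qed

lemma expand:
  assumes "i < n" "j < n"
  shows "X i j = (\<Sum>r<2 * (n * n). complex_of_real (enc n X r) * bas n r i j)"
proof -
  have b: "2 * (i * n + j) < 2 * (n * n)" "2 * (i * n + j) + 1 < 2 * (n * n)"
    using ij_bound[OF assms] by auto
  have "(\<Sum>r<2 * (n * n). complex_of_real (enc n X r) * bas n r i j)
      = (\<Sum>r<2 * (n * n). (if r = 2 * (i * n + j) then complex_of_real (Re (X i j)) else 0))
      + (\<Sum>r<2 * (n * n). (if r = 2 * (i * n + j) + 1 then complex_of_real (Im (X i j)) * \<i> else 0))"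
    by (simp only: expand_term[OF assms] sum.distrib)
  also have "\<dots> = complex_of_real (Re (X i j)) + complex_of_real (Im (X i j)) * \<i>"
    using b by (simp add: sum.delta)
  also have "\<dots> = X i j" by (simp add: complex_eq_iff)
  finally show ?thesis by simp
qed

lemma mat_eq_trans: "mat_eq n A B \<Longrightarrow> mat_eq n B C \<Longrightarrow> mat_eq n A C"
  by (simp add: mat_eq_def)

lemma mat_eq_refl: "mat_eq n A A"
  by (simp add: mat_eq_def)

lemma cptp_zero:
  assumes "cptp n E"
  shows "mat_eq n (E (\<lambda>i j. 0)) (\<lambda>i j. 0)"
proof -
  have lin: "\<forall>c A B. mat_eq n (E (\<lambda>i j. c * A i j + B i j)) (\<lambda>i j. c * E A i j + E B i j)"
    using assms by (simp add: cptp_def)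
  have "mat_eq n (E (\<lambda>i j. 1 * (\<lambda>i j. 0::complex) i j + (\<lambda>i j. 0) i j)) (\<lambda>i j. 1 * E (\<lambda>i j. 0) i j + E (\<lambda>i j. 0) i j)"
    using lin[rule_format, of 1 "\<lambda>i j. 0" "\<lambda>i j. 0"] by simp
  then show ?thesis by (simp add: mat_eq_def)
qed

lemma cptp_sum:
  assumes "cptp n E" "finite R"
  shows "mat_eq n (E (\<lambda>i j. \<Sum>r\<in>R. c r * M r i j)) (\<lambda>i j. \<Sum>r\<in>R. c r * E (M r) i j)"
  using assms(2)
proof (induction R rule: finite_induct)
  case empty
  then show ?case using cptp_zero[OF assms(1)] by simp
next
  case (insert x R)
  have lin0: "\<forall>c A B. mat_eq n (E (\<lambda>i j. c * A i j + B i j)) (\<lambda>i j. c * E A i j + E B i j)"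
    using assms(1) by (simp add: cptp_def)
  have lin: "mat_eq n (E (\<lambda>i j. c x * M x i j + (\<Sum>r\<in>R. c r * M r i j)))
     (\<lambda>i j. c x * E (M x) i j + E (\<lambda>i j. \<Sum>r\<in>R. c r * M r i j) i j)"
    using lin0[rule_format, of "c x" "M x" "\<lambda>i j. \<Sum>r\<in>R. c r * M r i j"] by simp
  show ?case using insert lin by (simp add: mat_eq_def)
qed

lemma div_bound:
  fixes s n :: nat
  assumes "s < 2 * (n * n)"
  shows "(s div 2) div n < n" "(s div 2) mod n < n"
proof -
  have "s div 2 < n * n" using assms by simp
  then show "(s div 2) div n < n" by (simp add: less_mult_imp_div_less)
  from \<open>s div 2 < n * n\<close> have "n > 0" by (cases n) auto
  then show "(s div 2) mod n < n" by simp
qed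

lemma enc_cong:
  assumes "s < 2 * (n * n)" "mat_eq n X Y"
  shows "enc n X s = enc n Y s"
  using div_bound[OF assms(1)] assms(2) by (simp add: enc_def mat_eq_def)

definition Amat :: "nat \<Rightarrow> (nat \<Rightarrow> cmat \<Rightarrow> cmat) \<Rightarrow> nat \<Rightarrow> nat \<Rightarrow> nat \<Rightarrow> real" where
  "Amat n E \<sigma> r s = enc n (E \<sigma> (bas n r)) s"

lemma enc_sum:
  "enc n (\<lambda>i j. \<Sum>r\<in>R. complex_of_real (c r) * M r i j) s = (\<Sum>r\<in>R. c r * enc n (M r) s)"
  by (simp add: enc_def Re_sum Im_sum)

lemma enc_step:
  assumes "cptp n E" "s < 2 * (n * n)"
  shows "enc n (E X) s = (\<Sum>r<2 * (n * n). enc n X r * enc n (E (bas n r)) s)"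
proof -
  let ?d = "2 * (n * n)"
  have m1: "mat_eq n X (\<lambda>i j. \<Sum>r<?d. complex_of_real (enc n X r) * bas n r i j)"
    unfolding mat_eq_def using expand[of _ n _ X] by blast
  have m2: "mat_eq n (E X) (E (\<lambda>i j. \<Sum>r<?d. complex_of_real (enc n X r) * bas n r i j))"
    using assms(1) m1 unfolding cptp_def by blast
  have m3: "mat_eq n (E (\<lambda>i j. \<Sum>r<?d. complex_of_real (enc n X r) * bas n r i j))
                     (\<lambda>i j. \<Sum>r<?d. complex_of_real (enc n X r) * E (bas n r) i j)"
    by (rule cptp_sum[OF assms(1)]) simp
  have "enc n (E X) s = enc n (\<lambda>i j. \<Sum>r<?d. complex_of_real (enc n X r) * E (bas n r) i j) s"
    by (rule enc_cong[OF assms(2) mat_eq_trans[OF m2 m3]])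
  also have "\<dots> = (\<Sum>r<?d. enc n X r * enc n (E (bas n r)) s)"
    by (rule enc_sum)
  finally show ?thesis .
qed

lemma enc_fold:
  assumes "\<forall>\<sigma>\<in>Alph. cptp n (E \<sigma>)" "set w \<subseteq> Alph" "s < 2 * (n * n)"
  shows "enc n (foldl (\<lambda>\<rho> \<sigma>. E \<sigma> \<rho>) \<rho>0 w) s = foldl (vstep (2 * (n * n)) (Amat n E)) (enc n \<rho>0) w s"
  using assms(2,3)
proof (induction w arbitrary: s rule: rev_induct)
  case Nil then show ?case by simp
next
  case (snoc x w)
  have cx: "cptp n (E x)" using assms(1) snoc.prems by auto
  have "enc n (foldl (\<lambda>\<rho> \<sigma>. E \<sigma> \<rho>) \<rho>0 (w @ [x])) s = enc n (E x (foldl (\<lambda>\<rho> \<sigma>. E \<sigma> \<rho>) \<rho>0 w)) s"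
    by simp
  also have "\<dots> = (\<Sum>r<2 * (n * n). enc n (foldl (\<lambda>\<rho> \<sigma>. E \<sigma> \<rho>) \<rho>0 w) r * enc n (E x (bas n r)) s)"
    by (rule enc_step[OF cx snoc.prems(2)])
  also have "\<dots> = (\<Sum>r<2 * (n * n). foldl (vstep (2 * (n * n)) (Amat n E)) (enc n \<rho>0) w r * Amat n E x r s)"
  proof (rule sum.cong[OF refl])
    fix r assume "r \<in> {..<2 * (n * n)}"
    then have "enc n (foldl (\<lambda>\<rho> \<sigma>. E \<sigma> \<rho>) \<rho>0 w) r = foldl (vstep (2 * (n * n)) (Amat n E)) (enc n \<rho>0) w r"
      using snoc.IH snoc.prems(1) by auto
    then show "enc n (foldl (\<lambda>\<rho> \<sigma>. E \<sigma> \<rho>) \<rho>0 w) r * enc n (E x (bas n r)) s = foldl (vstep (2 * (n * n)) (Amat n E)) (enc n \<rho>0) w r * Amat n E x r s"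
      by (simp add: Amat_def)
  qed
  also have "\<dots> = foldl (vstep (2 * (n * n)) (Amat n E)) (enc n \<rho>0) (w @ [x]) s"
    by (simp add: vstep_def vec_mat_def)
  finally show ?case .
qed

lemma trace_fold:
  assumes "\<forall>\<sigma>\<in>Alph. cptp n (E \<sigma>)" "set w \<subseteq> Alph"
  shows "ctrace n (foldl (\<lambda>\<rho> \<sigma>. E \<sigma> \<rho>) \<rho>0 w) = ctrace n \<rho>0"
  using assms(2)
proof (induction w rule: rev_induct)
  case Nil then show ?case by simp
next
  case (snoc x w)
  have cx: "cptp n (E x)" using assms(1) snoc.prems by auto
  then show ?case using snoc by (simp add: cptp_def)
qed

lemma ctrace_expand:
  "ctrace n X = (\<Sum>r<2 * (n * n). complex_of_real (enc n X r) * ctrace n (bas n r))"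
proof -
  have "ctrace n X = (\<Sum>i<n. \<Sum>r<2 * (n * n). complex_of_real (enc n X r) * bas n r i i)"
    unfolding ctrace_def by (rule sum.cong) (auto intro: expand)
  also have "\<dots> = (\<Sum>r<2 * (n * n). complex_of_real (enc n X r) * ctrace n (bas n r))"
    unfolding ctrace_def by (simp add: sum_distrib_left sum.swap[of "\<lambda>i r. complex_of_real (enc n X r) * bas n r i i"])
  finally show ?thesis .
qed

lemma ctrace_mult_expand:
  "ctrace n (cmat_mult n P X) = (\<Sum>r<2 * (n * n). complex_of_real (enc n X r) * ctrace n (cmat_mult n P (bas n r)))"
proof -
  have "ctrace n (cmat_mult n P X) = (\<Sum>i<n. \<Sum>l<n. P i l * X l i)"
    by (simp add: ctrace_def cmat_mult_def)
  also have "\<dots> = (\<Sum>i<n. \<Sum>l<n. \<Sum>r<2 * (n * n). complex_of_real (enc n X r) * (P i l * bas n r l i))"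
    by (intro sum.cong refl) (simp add: expand[of _ n _ X] sum_distrib_left mult.left_commute)
  also have "\<dots> = (\<Sum>r<2 * (n * n). \<Sum>i<n. \<Sum>l<n. complex_of_real (enc n X r) * (P i l * bas n r l i))"
    by (simp add: sum.swap[of _ "{..<n}" "{..<2 * (n * n)}"] sum.swap[of _ "{..<n}" "{..<2 * (n * n)}"])
  also have "\<dots> = (\<Sum>r<2 * (n * n). complex_of_real (enc n X r) * ctrace n (cmat_mult n P (bas n r)))"
    by (simp add: ctrace_def cmat_mult_def sum_distrib_left)
  finally show ?thesis .
qed


lemma gqfa_linear:
  assumes "is_gqfa n Alph \<rho>0 E Pacc" "set w \<subseteq> Alph"
  shows "gqfa_prob n \<rho>0 E Pacc w - lam =
    (\<Sum>s<2 * (n * n). foldl (vstep (2 * (n * n)) (Amat n E)) (enc n \<rho>0) w s *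
        (Re (ctrace n (cmat_mult n Pacc (bas n s))) - lam * Re (ctrace n (bas n s))))"
proof -
  let ?d = "2 * (n * n)"
  let ?\<rho> = "foldl (\<lambda>\<rho> \<sigma>. E \<sigma> \<rho>) \<rho>0 w"
  have cp: "\<forall>\<sigma>\<in>Alph. cptp n (E \<sigma>)" using assms(1) by (simp add: is_gqfa_def)
  have tr: "ctrace n ?\<rho> = 1"
    using trace_fold[OF cp assms(2)] assms(1) by (simp add: is_gqfa_def density_def)
  have e1: "gqfa_prob n \<rho>0 E Pacc w = (\<Sum>s<?d. enc n ?\<rho> s * Re (ctrace n (cmat_mult n Pacc (bas n s))))"
    unfolding gqfa_prob_def by (subst ctrace_mult_expand) (simp add: Re_sum)
  have "1 = Re (ctrace n ?\<rho>)" using tr by simp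
  also have "\<dots> = (\<Sum>s<?d. enc n ?\<rho> s * Re (ctrace n (bas n s)))"
    by (subst ctrace_expand) (simp add: Re_sum)
  finally have e2: "lam = lam * (\<Sum>s<?d. enc n ?\<rho> s * Re (ctrace n (bas n s)))" by simp
  have "gqfa_prob n \<rho>0 E Pacc w - lam = (\<Sum>s<?d. enc n ?\<rho> s *
        (Re (ctrace n (cmat_mult n Pacc (bas n s))) - lam * Re (ctrace n (bas n s))))"
    apply (subst e2)
    apply (subst e1)
    by (simp add: algebra_simps sum_subtractf sum_distrib_left)
  also have "\<dots> = (\<Sum>s<?d. foldl (vstep ?d (Amat n E)) (enc n \<rho>0) w s *
        (Re (ctrace n (cmat_mult n Pacc (bas n s))) - lam * Re (ctrace n (bas n s))))"
    by (intro sum.cong refl) (simp add: enc_fold[OF cp assms(2)])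
  finally show ?thesis .
qed

lemma upper:
  shows "simulates_all n (2 * (n * n) + 2)"
  unfolding simulates_all_def
proof (intro allI impI)
  fix Alph :: "nat set" and \<rho>0 E Pacc and lam :: real
  assume H: "finite Alph \<and> is_gqfa n Alph \<rho>0 E Pacc \<and> 0 \<le> lam \<and> lam < 1"
  let ?d = "2 * (n * n)"
  define \<eta> where "\<eta> s = Re (ctrace n (cmat_mult n Pacc (bas n s))) - lam * Re (ctrace n (bas n s))" for s
  obtain ini T Te F \<mu> where P: "is_pfa (Suc (Suc ?d)) Alph ini T Te F" "0 \<le> \<mu>" "\<mu> < 1"
    "\<forall>w. pfa_prob (Suc (Suc ?d)) ini T Te F w > \<mu> \<longleftrightarrow> (\<Sum>s<?d. foldl (vstep ?d (Amat n E)) (enc n \<rho>0) w s * \<eta> s) > 0"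
    using turakainen[of Alph ?d "Amat n E" "enc n \<rho>0" \<eta>] H by blast
  have "pfa_lang (Suc (Suc ?d)) Alph ini T Te F \<mu> = gqfa_lang n Alph \<rho>0 E Pacc lam"
  proof (intro set_eqI iffI)
    fix w assume "w \<in> pfa_lang (Suc (Suc ?d)) Alph ini T Te F \<mu>"
    then have w: "set w \<subseteq> Alph" "pfa_prob (Suc (Suc ?d)) ini T Te F w > \<mu>" by (auto simp: pfa_lang_def)
    then have "gqfa_prob n \<rho>0 E Pacc w - lam > 0"
      using P(4) gqfa_linear[of n Alph \<rho>0 E Pacc w lam] H unfolding \<eta>_def by simp
    then show "w \<in> gqfa_lang n Alph \<rho>0 E Pacc lam" using w by (simp add: gqfa_lang_def)
  next
    fix w assume "w \<in> gqfa_lang n Alph \<rho>0 E Pacc lam"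
    then have w: "set w \<subseteq> Alph" "gqfa_prob n \<rho>0 E Pacc w - lam > 0" by (auto simp: gqfa_lang_def)
    then have "pfa_prob (Suc (Suc ?d)) ini T Te F w > \<mu>"
      using P(4) gqfa_linear[of n Alph \<rho>0 E Pacc w lam] H unfolding \<eta>_def by simp
    then show "w \<in> pfa_lang (Suc (Suc ?d)) Alph ini T Te F \<mu>" using w by (simp add: pfa_lang_def)
  qed
  note L = this
  show "\<exists>k ini T Te F \<mu>. k \<le> 2 * (n * n) + 2 \<and> is_pfa k Alph ini T Te F \<and> 0 \<le> \<mu> \<and> \<mu> < 1 \<and>
            pfa_lang k Alph ini T Te F \<mu> = gqfa_lang n Alph \<rho>0 E Pacc lam"
    using P(1-3) L by (intro exI[of _ "Suc (Suc ?d)"] exI[of _ ini] exI[of _ T] exI[of _ Te] exI[of _ F] exI[of _ \<mu>]) auto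
qed


lemma sum4_swap:
  "(\<Sum>a\<in>A. \<Sum>b\<in>B. \<Sum>c\<in>C. \<Sum>e\<in>D. f a b c e) = (\<Sum>c\<in>C. \<Sum>e\<in>D. \<Sum>a\<in>A. \<Sum>b\<in>B. f a b c e)"
proof -
  have "(\<Sum>a\<in>A. \<Sum>b\<in>B. \<Sum>c\<in>C. \<Sum>e\<in>D. f a b c e) = (\<Sum>a\<in>A. \<Sum>c\<in>C. \<Sum>e\<in>D. \<Sum>b\<in>B. f a b c e)"
  proof (rule sum.cong[OF refl])
    fix a
    have "(\<Sum>b\<in>B. \<Sum>c\<in>C. \<Sum>e\<in>D. f a b c e) = (\<Sum>c\<in>C. \<Sum>b\<in>B. \<Sum>e\<in>D. f a b c e)" by (rule sum.swap)
    also have "\<dots> = (\<Sum>c\<in>C. \<Sum>e\<in>D. \<Sum>b\<in>B. f a b c e)" by (rule sum.cong[OF refl]) (rule sum.swap)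
    finally show "(\<Sum>b\<in>B. \<Sum>c\<in>C. \<Sum>e\<in>D. f a b c e) = (\<Sum>c\<in>C. \<Sum>e\<in>D. \<Sum>b\<in>B. f a b c e)" .
  qed
  also have "\<dots> = (\<Sum>c\<in>C. \<Sum>a\<in>A. \<Sum>e\<in>D. \<Sum>b\<in>B. f a b c e)" by (rule sum.swap)
  also have "\<dots> = (\<Sum>c\<in>C. \<Sum>e\<in>D. \<Sum>a\<in>A. \<Sum>b\<in>B. f a b c e)" by (rule sum.cong[OF refl]) (rule sum.swap)
  finally show ?thesis .
qed

definition qform :: "nat \<Rightarrow> cmat \<Rightarrow> (nat \<Rightarrow> complex) \<Rightarrow> complex" where
  "qform N A x = (\<Sum>i<N. \<Sum>j<N. cnj (x i) * A i j * x j)"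

lemma psd_qform: "psd N A \<longleftrightarrow> (\<forall>x. Im (qform N A x) = 0 \<and> 0 \<le> Re (qform N A x))"
  by (simp add: psd_def qform_def Let_def)

lemma psd_conj:
  assumes "psd N X"
  shows "psd N (\<lambda>a b. \<Sum>c<N. \<Sum>e<N. W a c * X c e * cnj (W b e))"
  unfolding psd_qform
proof
  fix x
  define y where "y e = (\<Sum>b<N. cnj (W b e) * x b)" for e
  have "qform N (\<lambda>a b. \<Sum>c<N. \<Sum>e<N. W a c * X c e * cnj (W b e)) x
      = (\<Sum>a<N. \<Sum>b<N. \<Sum>c<N. \<Sum>e<N. cnj (x a) * W a c * X c e * cnj (W b e) * x b)"
    unfolding qform_def by (simp add: sum_distrib_left sum_distrib_right mult.assoc)
  also have "\<dots> = (\<Sum>c<N. \<Sum>e<N. \<Sum>a<N. \<Sum>b<N. cnj (x a) * W a c * X c e * cnj (W b e) * x b)"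
    by (rule sum4_swap)
  also have "\<dots> = qform N X y"
    unfolding qform_def y_def by (simp add: sum_distrib_left sum_distrib_right mult.assoc mult.left_commute mult.commute)
  finally have "qform N (\<lambda>a b. \<Sum>c<N. \<Sum>e<N. W a c * X c e * cnj (W b e)) x = qform N X y" .
  then show "Im (qform N (\<lambda>a b. \<Sum>c<N. \<Sum>e<N. W a c * X c e * cnj (W b e)) x) = 0 \<and>
        0 \<le> Re (qform N (\<lambda>a b. \<Sum>c<N. \<Sum>e<N. W a c * X c e * cnj (W b e)) x)"
    using assms unfolding psd_qform by simp
qed

lemma psd_sum:
  assumes "finite K" "\<forall>k\<in>K. psd N (M k)"
  shows "psd N (\<lambda>a b. \<Sum>k\<in>K. M k a b)"
  unfolding psd_qform
proof
  fix x
  have "qform N (\<lambda>a b. \<Sum>k\<in>K. M k a b) x = (\<Sum>k\<in>K. qform N (M k) x)"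
    unfolding qform_def
    by (simp add: sum_distrib_left sum_distrib_right mult.assoc sum.swap[of _ K "{..<N}"])
  moreover have "\<forall>k\<in>K. Im (qform N (M k) x) = 0 \<and> 0 \<le> Re (qform N (M k) x)"
    using assms(2) unfolding psd_qform by blast
  ultimately show "Im (qform N (\<lambda>a b. \<Sum>k\<in>K. M k a b) x) = 0 \<and> 0 \<le> Re (qform N (\<lambda>a b. \<Sum>k\<in>K. M k a b) x)"
    by (simp add: Im_sum Re_sum sum_nonneg)
qed

lemma psd_cong:
  assumes "psd N A" "\<forall>a<N. \<forall>b<N. A a b = B a b"
  shows "psd N B"
proof -
  have "qform N A x = qform N B x" for x
    unfolding qform_def using assms(2) by (intro sum.cong refl) auto
  then show ?thesis using assms(1) unfolding psd_qform by simp
qed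


definition kraus :: "nat \<Rightarrow> 'k set \<Rightarrow> ('k \<Rightarrow> cmat) \<Rightarrow> cmat \<Rightarrow> cmat" where
  "kraus n Ks K X = (\<lambda>x y. \<Sum>k\<in>Ks. \<Sum>p<n. \<Sum>q<n. K k x p * X p q * cnj (K k y q))"

lemma block_sum:
  fixes n m \<alpha> :: nat
  assumes "0 < n" "\<alpha> < m"
  shows "(\<Sum>c<m * n. if c div n = \<alpha> then g c else 0) = (\<Sum>p<n. g (\<alpha> * n + p))"
proof -
  have set_eq: "{c \<in> {..<m * n}. c div n = \<alpha>} = {0 + \<alpha> * n..<n + \<alpha> * n}"
  proof (intro set_eqI iffI)
    fix c assume "c \<in> {c \<in> {..<m * n}. c div n = \<alpha>}"
    then have "c div n = \<alpha>" by simp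
    then have "\<alpha> * n \<le> c" "c < (\<alpha> + 1) * n"
      using assms(1) less_eq_div_iff_mult_less_eq[of n \<alpha> c] div_less_iff_less_mult[of n c "\<alpha> + 1"] by auto
    then show "c \<in> {0 + \<alpha> * n..<n + \<alpha> * n}" by simp
  next
    fix c assume "c \<in> {0 + \<alpha> * n..<n + \<alpha> * n}"
    then have c: "\<alpha> * n \<le> c" "c < (\<alpha> + 1) * n" by auto
    then have "\<alpha> \<le> c div n" "c div n < \<alpha> + 1"
      using assms(1) less_eq_div_iff_mult_less_eq[of n \<alpha> c] div_less_iff_less_mult[of n c "\<alpha> + 1"] by auto
    moreover have "c < m * n"
    proof -
      have "(\<alpha> + 1) * n \<le> m * n" using assms(2) by (intro mult_right_mono) auto
      then show ?thesis using c by linarith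
    qed
    ultimately show "c \<in> {c \<in> {..<m * n}. c div n = \<alpha>}" by simp
  qed
  have "(\<Sum>c<m * n. if c div n = \<alpha> then g c else 0) = sum g {c \<in> {..<m * n}. c div n = \<alpha>}"
    by (rule sum.inter_filter[symmetric]) simp
  also have "\<dots> = sum g {0 + \<alpha> * n..<n + \<alpha> * n}" by (simp only: set_eq)
  also have "\<dots> = (\<Sum>p = 0..<n. g (p + \<alpha> * n))" by (rule sum.shift_bounds_nat_ivl)
  also have "\<dots> = (\<Sum>p<n. g (\<alpha> * n + p))" by (simp add: atLeast0LessThan add.commute)
  finally show ?thesis .
qed

definition Wk :: "nat \<Rightarrow> cmat \<Rightarrow> cmat" where
  "Wk n K = (\<lambda>a c. if c div n = a div n then K (a mod n) (c mod n) else 0)"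

lemma ampl_conj_eq:
  fixes n m a b :: nat
  assumes "0 < n" "a < m * n" "b < m * n"
  shows "(\<Sum>p<n. \<Sum>q<n. K (a mod n) p * X ((a div n) * n + p) ((b div n) * n + q) * cnj (K (b mod n) q))
       = (\<Sum>c<m * n. \<Sum>e<m * n. Wk n K a c * X c e * cnj (Wk n K b e))"
proof -
  have am: "a div n < m" "b div n < m" using assms by (auto simp: less_mult_imp_div_less)
  have inner: "(\<Sum>e<m * n. Wk n K a c * X c e * cnj (Wk n K b e))
      = Wk n K a c * (\<Sum>q<n. X c ((b div n) * n + q) * cnj (K (b mod n) q))" for c
  proof -
    have cw: "cnj (Wk n K b e) = (if e div n = b div n then cnj (K (b mod n) (e mod n)) else 0)" for e
      by (simp add: Wk_def)
    have "(\<Sum>e<m * n. Wk n K a c * X c e * cnj (Wk n K b e))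
        = Wk n K a c * (\<Sum>e<m * n. if e div n = b div n then X c e * cnj (K (b mod n) (e mod n)) else 0)"
      unfolding sum_distrib_left by (rule sum.cong) (simp_all only: cw, simp)
    also have "\<dots> = Wk n K a c * (\<Sum>q<n. X c ((b div n) * n + q) * cnj (K (b mod n) q))"
      using block_sum[OF assms(1) am(2), of "\<lambda>e. X c e * cnj (K (b mod n) (e mod n))"] assms(1)
      by simp
    finally show ?thesis .
  qed
  have "(\<Sum>c<m * n. \<Sum>e<m * n. Wk n K a c * X c e * cnj (Wk n K b e))
      = (\<Sum>c<m * n. if c div n = a div n then K (a mod n) (c mod n) * (\<Sum>q<n. X c ((b div n) * n + q) * cnj (K (b mod n) q)) else 0)"
    by (rule sum.cong[OF refl]) (simp only: inner, simp add: Wk_def)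
  also have "\<dots> = (\<Sum>p<n. K (a mod n) p * (\<Sum>q<n. X ((a div n) * n + p) ((b div n) * n + q) * cnj (K (b mod n) q)))"
  proof -
    have "(\<Sum>c<m * n. if c div n = a div n then K (a mod n) (c mod n) * (\<Sum>q<n. X c ((b div n) * n + q) * cnj (K (b mod n) q)) else 0)
       = (\<Sum>p<n. K (a mod n) (((a div n) * n + p) mod n) * (\<Sum>q<n. X ((a div n) * n + p) ((b div n) * n + q) * cnj (K (b mod n) q)))"
      by (rule block_sum[OF assms(1) am(1)])
    also have "\<dots> = (\<Sum>p<n. K (a mod n) p * (\<Sum>q<n. X ((a div n) * n + p) ((b div n) * n + q) * cnj (K (b mod n) q)))"
      by (rule sum.cong[OF refl]) simp
    finally show ?thesis .
  qed
  also have "\<dots> = (\<Sum>p<n. \<Sum>q<n. K (a mod n) p * X ((a div n) * n + p) ((b div n) * n + q) * cnj (K (b mod n) q))"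
    by (simp add: sum_distrib_left mult.assoc)
  finally show ?thesis by simp
qed

lemma kraus_cp:
  assumes "finite Ks" "0 < n" "psd (m * n) X"
  shows "psd (m * n) (ampl n (kraus n Ks K) X)"
proof -
  have "psd (m * n) (\<lambda>a b. \<Sum>k\<in>Ks. (\<Sum>c<m * n. \<Sum>e<m * n. Wk n (K k) a c * X c e * cnj (Wk n (K k) b e)))"
    using assms(1) by (intro psd_sum ballI psd_conj assms(3))
  moreover have "\<forall>a<m * n. \<forall>b<m * n. (\<Sum>k\<in>Ks. (\<Sum>c<m * n. \<Sum>e<m * n. Wk n (K k) a c * X c e * cnj (Wk n (K k) b e)))
        = ampl n (kraus n Ks K) X a b"
    unfolding ampl_def kraus_def using ampl_conj_eq[OF assms(2)] by simp
  ultimately show ?thesis by (rule psd_cong)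
qed

lemma kraus_trace:
  assumes "\<forall>p<n. \<forall>q<n. (\<Sum>k\<in>Ks. \<Sum>x<n. K k x p * cnj (K k x q)) = (if p = q then 1 else 0)"
  shows "ctrace n (kraus n Ks K A) = ctrace n A"
proof -
  have "ctrace n (kraus n Ks K A) = (\<Sum>x<n. \<Sum>k\<in>Ks. \<Sum>p<n. \<Sum>q<n. K k x p * A p q * cnj (K k x q))"
    by (simp add: ctrace_def kraus_def)
  also have "\<dots> = (\<Sum>k\<in>Ks. \<Sum>x<n. \<Sum>p<n. \<Sum>q<n. K k x p * A p q * cnj (K k x q))"
    by (rule sum.swap)
  also have "\<dots> = (\<Sum>p<n. \<Sum>q<n. \<Sum>k\<in>Ks. \<Sum>x<n. K k x p * A p q * cnj (K k x q))"
    by (rule sum4_swap)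
  also have "\<dots> = (\<Sum>p<n. \<Sum>q<n. A p q * (\<Sum>k\<in>Ks. \<Sum>x<n. K k x p * cnj (K k x q)))"
    by (simp add: sum_distrib_left mult.commute mult.left_commute)
  also have "\<dots> = (\<Sum>p<n. \<Sum>q<n. A p q * (if p = q then 1 else 0))"
    using assms by (intro sum.cong refl) simp
  also have "\<dots> = ctrace n A"
    unfolding ctrace_def
  proof (rule sum.cong[OF refl])
    fix p assume "p \<in> {..<n}"
    have "(\<Sum>q<n. A p q * (if p = q then 1 else 0)) = (\<Sum>q<n. if p = q then A p q else 0)"
      by (rule sum.cong) auto
    also have "\<dots> = A p p" using \<open>p \<in> {..<n}\<close> by simp
    finally show "(\<Sum>q<n. A p q * (if p = q then 1 else 0)) = A p p" .
  qed
  finally show ?thesis .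
qed

lemma kraus_cptp:
  assumes "finite Ks" "0 < n"
    "\<forall>p<n. \<forall>q<n. (\<Sum>k\<in>Ks. \<Sum>x<n. K k x p * cnj (K k x q)) = (if p = q then 1 else 0)"
  shows "cptp n (kraus n Ks K)"
  unfolding cptp_def
proof (intro conjI allI impI)
  fix A B assume "mat_eq n A B"
  then show "mat_eq n (kraus n Ks K A) (kraus n Ks K B)"
    unfolding mat_eq_def kraus_def by (auto intro!: sum.cong)
next
  fix c A B
  show "mat_eq n (kraus n Ks K (\<lambda>i j. c * A i j + B i j)) (\<lambda>i j. c * kraus n Ks K A i j + kraus n Ks K B i j)"
    unfolding mat_eq_def kraus_def
    by (simp add: sum.distrib sum_distrib_left distrib_left distrib_right mult.assoc mult.left_commute)
next
  fix m X assume "psd (m * n) X"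
  then show "psd (m * n) (ampl n (kraus n Ks K) X)" by (rule kraus_cp[OF assms(1,2)])
next
  fix A show "ctrace n (kraus n Ks K A) = ctrace n A" by (rule kraus_trace[OF assms(3)])
qed


definition sg :: "(nat \<times> nat) set \<Rightarrow> nat \<Rightarrow> nat \<Rightarrow> complex" where
  "sg S i j = (if (min i j, max i j) \<in> S then 1 else -1)"

definition psi :: "(nat \<times> nat) set \<Rightarrow> nat \<Rightarrow> nat \<Rightarrow> nat \<Rightarrow> complex" where
  "psi S i j x = (if i = j then (if x = i then 1 + \<i> else 0)
                  else if x = i then 1 else if x = j then sg S i j else 0)"

lemma sg_sq: "sg S i j * cnj (sg S i j) = 1"
  by (simp add: sg_def)

lemma sg_sym: "sg S i j = sg S j i"
  by (simp add: sg_def min.commute max.commute)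

lemma cnj_sg: "cnj (sg S i j) = sg S i j"
  by (simp add: sg_def)

lemma psi_sq: "psi S i j x * cnj (psi S i j x) = (if x = i then 1 else 0) + (if x = j then 1 else 0)"
proof -
  have "(1 + \<i>) * cnj (1 + \<i>) = (2::complex)" by (simp add: complex_eq_iff)
  then show ?thesis by (auto simp: psi_def sg_sq)
qed

lemma psi_off:
  assumes "x \<noteq> y"
  shows "psi S i j x * cnj (psi S i j y) =
     (if i = x \<and> j = y then sg S x y else 0) + (if i = y \<and> j = x then sg S y x else 0)"
  using assms by (auto simp: psi_def cnj_sg)

lemma sum_sum_ind1:
  fixes x n :: nat
  assumes "x < n"
  shows "(\<Sum>i<n. \<Sum>j<n. (if x = i then 1 else 0) + (if x = j then (1::complex) else 0)) = 2 * of_nat n"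
proof -
  have "(\<Sum>i<n. \<Sum>j<n. (if x = i then 1 else 0) + (if x = j then (1::complex) else 0))
      = (\<Sum>i<n. (if x = i then of_nat n else 0) + 1)"
    using assms by (intro sum.cong refl) (simp add: sum.distrib)
  also have "\<dots> = of_nat n + of_nat n" using assms by (simp add: sum.distrib)
  finally show ?thesis by simp
qed

definition Phi :: "nat \<Rightarrow> (nat \<times> nat) set \<Rightarrow> nat \<Rightarrow> nat \<Rightarrow> complex" where
  "Phi n S x y = (\<Sum>i<n. \<Sum>j<n. psi S i j x * cnj (psi S i j y))"

lemma Phi_diag: "x < n \<Longrightarrow> Phi n S x x = 2 * of_nat n"
  unfolding Phi_def psi_sq by (rule sum_sum_ind1)

lemma Phi_off:
  assumes "x < n" "y < n" "x \<noteq> y"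
  shows "Phi n S x y = 2 * sg S x y"
proof -
  have "Phi n S x y = (\<Sum>i<n. \<Sum>j<n. (if i = x \<and> j = y then sg S x y else 0) + (if i = y \<and> j = x then sg S y x else 0))"
    unfolding Phi_def using psi_off[OF assms(3)] by simp
  also have "\<dots> = (\<Sum>i<n. (if i = x then sg S x y else 0) + (if i = y then sg S y x else 0))"
    using assms by (intro sum.cong refl) (simp add: sum.distrib)
  also have "\<dots> = sg S x y + sg S y x" using assms by (simp add: sum.distrib)
  finally show ?thesis by (simp add: sg_sym)
qed

definition kap :: "nat \<Rightarrow> complex" where
  "kap n = (1 + \<i>) / (2 * of_nat n)"

lemma kap_sq: "n > 0 \<Longrightarrow> kap n * cnj (kap n) = 1 / (2 * of_nat n * of_nat n)"
  by (simp add: kap_def complex_eq_iff field_simps power2_eq_square)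

definition kv :: complex where "kv = (1 + \<i>) / 2"

lemma kv_sq: "kv * cnj kv = 1 / 2"
  by (simp add: kv_def complex_eq_iff)

definition Kpre :: "nat \<Rightarrow> (nat \<times> nat) set \<Rightarrow> nat \<times> nat \<times> nat \<Rightarrow> cmat" where
  "Kpre n S = (\<lambda>(l, i, j) x p. kap n * psi S i j x * (if p = l then 1 else 0))"

definition Epre :: "nat \<Rightarrow> (nat \<times> nat) set \<Rightarrow> cmat \<Rightarrow> cmat" where
  "Epre n S = kraus n ({..<n} \<times> {..<n} \<times> {..<n}) (Kpre n S)"

lemma sum3: "(\<Sum>k\<in>A \<times> B \<times> C. f k) = (\<Sum>l\<in>A. \<Sum>i\<in>B. \<Sum>j\<in>C. f (l, i, j))"
  by (simp add: sum.cartesian_product')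

lemma Epre_trace_cond:
  assumes "n > 0"
  shows "\<forall>p<n. \<forall>q<n. (\<Sum>k\<in>{..<n} \<times> {..<n} \<times> {..<n}. \<Sum>x<n. Kpre n S k x p * cnj (Kpre n S k x q)) = (if p = q then 1 else 0)"
proof (intro allI impI)
  fix p q assume pq: "p < n" "q < n"
  have "(\<Sum>k\<in>{..<n} \<times> {..<n} \<times> {..<n}. \<Sum>x<n. Kpre n S k x p * cnj (Kpre n S k x q))
     = (\<Sum>l<n. \<Sum>i<n. \<Sum>j<n. \<Sum>x<n. (if p = l \<and> q = l then kap n * cnj (kap n) else 0) * (psi S i j x * cnj (psi S i j x)))"
    unfolding sum3 by (intro sum.cong refl) (auto simp: Kpre_def)
  also have "\<dots> = (\<Sum>l<n. (if p = l \<and> q = l then kap n * cnj (kap n) else 0) * (\<Sum>i<n. \<Sum>j<n. \<Sum>x<n. psi S i j x * cnj (psi S i j x)))"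
    by (simp add: sum_distrib_left)
  also have "(\<Sum>i<n. \<Sum>j<n. \<Sum>x<n. psi S i j x * cnj (psi S i j x)) = (\<Sum>i<n. \<Sum>j<n. (2::complex))"
    unfolding psi_sq by (intro sum.cong refl) (simp add: sum.distrib)
  also have "\<dots> = 2 * of_nat n * of_nat n" by simp
  also have "(\<Sum>l<n. (if p = l \<and> q = l then kap n * cnj (kap n) else 0) * (2 * of_nat n * of_nat n))
      = (\<Sum>l<n. if l = p then (if p = q then kap n * cnj (kap n) * (2 * of_nat n * of_nat n) else 0) else 0)"
    by (rule sum.cong) auto
  also have "\<dots> = (if p = q then kap n * cnj (kap n) * (2 * of_nat n * of_nat n) else 0)"
    using pq by simp
  also have "\<dots> = (if p = q then 1 else 0)"
    using assms by (simp add: kap_sq)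
  finally show "(\<Sum>k\<in>{..<n} \<times> {..<n} \<times> {..<n}. \<Sum>x<n. Kpre n S k x p * cnj (Kpre n S k x q)) = (if p = q then 1 else 0)" .
qed

lemma Epre_cptp: "n > 0 \<Longrightarrow> cptp n (Epre n S)"
  unfolding Epre_def by (rule kraus_cptp[OF _ _ Epre_trace_cond]) auto


definition ua :: "nat \<Rightarrow> nat \<Rightarrow> nat \<Rightarrow> complex" where
  "ua a b p = (if p = a then 1 else 0) + (if p = b then 1 else 0)"
definition ub :: "nat \<Rightarrow> nat \<Rightarrow> nat \<Rightarrow> complex" where
  "ub a b p = (if p = a then 1 else 0) - (if p = b then 1 else 0)"

definition Ksuf :: "nat \<Rightarrow> nat \<Rightarrow> nat \<Rightarrow> cmat" where
  "Ksuf a b k x p = (if k = a then (if x = 0 then kv * ua a b p else 0)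
                     else if k = b then (if x = 1 then kv * ub a b p else 0)
                     else (if x = 1 \<and> p = k then 1 else 0))"

definition Esuf :: "nat \<Rightarrow> nat \<Rightarrow> nat \<Rightarrow> cmat \<Rightarrow> cmat" where
  "Esuf n a b = kraus n {..<n} (Ksuf a b)"

lemma Esuf_trace_cond:
  assumes "a < n" "b < n" "a \<noteq> b" "2 \<le> n"
  shows "\<forall>p<n. \<forall>q<n. (\<Sum>k\<in>{..<n}. \<Sum>x<n. Ksuf a b k x p * cnj (Ksuf a b k x q)) = (if p = q then 1 else 0)"
proof (intro allI impI)
  fix p q assume pq: "p < n" "q < n"
  have n01: "0 < n" "1 < n" using assms by auto
  have fk: "(\<Sum>x<n. Ksuf a b k x p * cnj (Ksuf a b k x q)) =
      (if k = a then kv * cnj kv * (ua a b p * cnj (ua a b q)) else 0)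
    + (if k = b then kv * cnj kv * (ub a b p * cnj (ub a b q)) else 0)
    + (if k = p then (if p \<noteq> a \<and> p \<noteq> b \<and> q = p then 1 else 0) else 0)" for k
  proof -
    consider "k = a" | "k = b" | "k \<noteq> a" "k \<noteq> b" by blast
    then show ?thesis
    proof cases
      case 1
      have "(\<Sum>x<n. Ksuf a b k x p * cnj (Ksuf a b k x q)) = (\<Sum>x<n. if x = 0 then kv * cnj kv * (ua a b p * cnj (ua a b q)) else 0)"
        using 1 by (intro sum.cong refl) (simp add: Ksuf_def mult_ac)
      then show ?thesis using 1 assms n01 by simp
    next
      case 2
      have "(\<Sum>x<n. Ksuf a b k x p * cnj (Ksuf a b k x q)) = (\<Sum>x<n. if x = 1 then kv * cnj kv * (ub a b p * cnj (ub a b q)) else 0)"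
        using 2 assms by (intro sum.cong refl) (simp add: Ksuf_def mult_ac)
      then show ?thesis using 2 assms n01 by simp
    next
      case 3
      have "(\<Sum>x<n. Ksuf a b k x p * cnj (Ksuf a b k x q)) = (\<Sum>x<n. if x = 1 then (if p = k \<and> q = k then 1 else 0) else 0)"
        using 3 by (intro sum.cong refl) (simp add: Ksuf_def)
      then show ?thesis using 3 assms n01 by auto
    qed
  qed
  have "(\<Sum>k\<in>{..<n}. \<Sum>x<n. Ksuf a b k x p * cnj (Ksuf a b k x q))
     = kv * cnj kv * (ua a b p * cnj (ua a b q)) + kv * cnj kv * (ub a b p * cnj (ub a b q))
       + (if p \<noteq> a \<and> p \<noteq> b \<and> q = p then 1 else 0)"
    unfolding fk using assms pq by (simp add: sum.distrib)
  also have "\<dots> = (if p = q then 1 else 0)"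
    unfolding kv_sq using assms by (auto simp: ua_def ub_def)
  finally show "(\<Sum>k\<in>{..<n}. \<Sum>x<n. Ksuf a b k x p * cnj (Ksuf a b k x q)) = (if p = q then 1 else 0)" .
qed

lemma Esuf_cptp: "a < n \<Longrightarrow> b < n \<Longrightarrow> a \<noteq> b \<Longrightarrow> 2 \<le> n \<Longrightarrow> cptp n (Esuf n a b)"
  unfolding Esuf_def by (rule kraus_cptp[OF _ _ Esuf_trace_cond]) auto

definition e00 :: cmat where "e00 = (\<lambda>i j. if i = 0 \<and> j = 0 then 1 else 0)"

lemma sum_e00:
  assumes "0 < n"
  shows "(\<Sum>p<n. \<Sum>q<n. f p * e00 p q * g q) = f 0 * g 0"
proof -
  have "(\<Sum>p<n. \<Sum>q<n. f p * e00 p q * g q) = (\<Sum>p<n. if p = 0 then f 0 * g 0 else 0)"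
  proof (rule sum.cong[OF refl])
    fix p
    have "(\<Sum>q<n. f p * e00 p q * g q) = (\<Sum>q<n. if q = 0 then (if p = 0 then f p * g q else 0) else 0)"
      by (rule sum.cong) (auto simp: e00_def)
    also have "\<dots> = (if p = 0 then f 0 * g 0 else 0)" using assms by simp
    finally show "(\<Sum>q<n. f p * e00 p q * g q) = (if p = 0 then f 0 * g 0 else 0)" .
  qed
  also have "\<dots> = f 0 * g 0" using assms by simp
  finally show ?thesis .
qed

lemma Epre_e00:
  assumes "0 < n"
  shows "Epre n S e00 x y = kap n * cnj (kap n) * Phi n S x y"
proof -
  have "Epre n S e00 x y = (\<Sum>k\<in>{..<n} \<times> {..<n} \<times> {..<n}. Kpre n S k x 0 * cnj (Kpre n S k y 0))"
    unfolding Epre_def kraus_def using sum_e00[OF assms] by simp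
  also have "\<dots> = (\<Sum>l<n. \<Sum>i<n. \<Sum>j<n. if l = 0 then kap n * cnj (kap n) * (psi S i j x * cnj (psi S i j y)) else 0)"
    unfolding sum3 by (intro sum.cong refl) (auto simp: Kpre_def mult_ac)
  also have "\<dots> = (\<Sum>l<n. if l = 0 then kap n * cnj (kap n) * Phi n S x y else 0)"
    unfolding Phi_def by (intro sum.cong refl) (simp add: sum_distrib_left)
  also have "\<dots> = kap n * cnj (kap n) * Phi n S x y" using assms by simp
  finally show ?thesis .
qed

lemma sum_ua:
  fixes a b n :: nat
  assumes "a < n" "b < n" "a \<noteq> b"
  shows "(\<Sum>p<n. ((if p = a then 1 else 0) + (if p = b then 1 else 0)) * h p) = h a + (h b :: complex)"
proof -
  have "(\<Sum>p<n. ((if p = a then 1 else 0) + (if p = b then 1 else 0)) * h p)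
      = (\<Sum>p<n. (if p = a then h p else 0) + (if p = b then h p else 0))"
    by (rule sum.cong) auto
  also have "\<dots> = h a + h b" using assms by (simp add: sum.distrib)
  finally show ?thesis .
qed

lemma cnj_ua: "cnj (ua a b q) = ua a b q"
  by (simp add: ua_def)

lemma Ksuf_0:
  assumes "a \<noteq> b"
  shows "Ksuf a b k 0 p = (if k = a then kv * ua a b p else 0)"
  using assms by (simp add: Ksuf_def)

lemma Esuf_00:
  assumes "a < n" "b < n" "a \<noteq> b" "2 \<le> n"
  shows "Esuf n a b Y 0 0 = kv * cnj kv * (Y a a + Y a b + Y b a + Y b b)"
proof -
  have "Esuf n a b Y 0 0 = (\<Sum>k<n. if k = a then (\<Sum>p<n. \<Sum>q<n. kv * ua a b p * Y p q * cnj (kv * ua a b q)) else 0)"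
    unfolding Esuf_def kraus_def Ksuf_0[OF assms(3)] by (intro sum.cong refl) auto
  also have "\<dots> = (\<Sum>p<n. \<Sum>q<n. kv * ua a b p * Y p q * cnj (kv * ua a b q))" using assms by simp
  also have "\<dots> = kv * cnj kv * (\<Sum>p<n. ua a b p * (\<Sum>q<n. ua a b q * Y p q))"
    by (simp add: sum_distrib_left cnj_ua mult_ac)
  also have "\<dots> = kv * cnj kv * ((Y a a + Y a b) + (Y b a + Y b b))"
    unfolding ua_def using sum_ua[OF assms(1-3)] by simp
  finally show ?thesis by (simp add: add.assoc)
qed

lemma ctrace_e00: "0 < n \<Longrightarrow> ctrace n (cmat_mult n e00 X) = X 0 0"
proof -
  assume n0: "0 < n"
  have "(\<Sum>i<n. \<Sum>l<n. e00 i l * X l i) = (\<Sum>i<n. if i = 0 then X 0 0 else 0)"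
  proof (rule sum.cong[OF refl])
    fix i
    have "(\<Sum>l<n. e00 i l * X l i) = (\<Sum>l<n. if l = 0 then (if i = 0 then X 0 0 else 0) else 0)"
      by (rule sum.cong) (auto simp: e00_def)
    then show "(\<Sum>l<n. e00 i l * X l i) = (if i = 0 then X 0 0 else 0)" using n0 by simp
  qed
  then show ?thesis using n0 by (simp add: ctrace_def cmat_mult_def)
qed

lemma accept_val:
  assumes "a < b" "b < n" "2 \<le> n"
  shows "Re (ctrace n (cmat_mult n e00 (Esuf n a b (Epre n S e00))))
       = (real n + (if (a, b) \<in> S then 1 else -1)) / (real n)^2"
proof -
  have n0: "0 < n" using assms by auto
  have ab: "a < n" "a \<noteq> b" using assms by auto
  have "ctrace n (cmat_mult n e00 (Esuf n a b (Epre n S e00)))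
      = kv * cnj kv * (kap n * cnj (kap n)) * (Phi n S a a + Phi n S a b + Phi n S b a + Phi n S b b)"
    using Esuf_00[OF ab(1) assms(2) ab(2) assms(3)] ctrace_e00[OF n0] Epre_e00[OF n0]
    by (simp add: algebra_simps)
  also have "\<dots> = (1/2) * (1 / (2 * of_nat n * of_nat n)) * (4 * of_nat n + 4 * sg S a b)"
    using Phi_diag[of a n S] Phi_diag[of b n S] Phi_off[of a n b S] Phi_off[of b n a S] ab assms n0
    by (simp add: kv_sq kap_sq sg_sym algebra_simps)
  also have "\<dots> = (of_nat n + sg S a b) / (of_nat n)^2"
    using n0 by (simp add: field_simps power2_eq_square)
  finally have "ctrace n (cmat_mult n e00 (Esuf n a b (Epre n S e00))) = (of_nat n + sg S a b) / (of_nat n)^2" .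
  moreover have "sg S a b = (if (a, b) \<in> S then 1 else -1)"
    using assms by (simp add: sg_def min_def max_def)
  ultimately show ?thesis by (simp add: power2_eq_square)
qed


lemma dep:
  fixes b :: "'a \<Rightarrow> nat \<Rightarrow> real"
  assumes "finite I" "card I > k"
  shows "\<exists>c. (\<exists>p\<in>I. c p \<noteq> 0) \<and> (\<forall>i<k. (\<Sum>p\<in>I. c p * b p i) = 0)"
  using assms
proof (induction k arbitrary: I b)
  case 0
  then obtain p0 where "p0 \<in> I" by fastforce
  then show ?case by (intro exI[of _ "\<lambda>p. if p = p0 then 1 else 0"]) auto
next
  case (Suc k)
  show ?case
  proof (cases "\<forall>p\<in>I. b p k = 0")
    case True
    obtain c where c: "\<exists>p\<in>I. c p \<noteq> 0" "\<forall>i<k. (\<Sum>p\<in>I. c p * b p i) = 0"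
      using Suc.IH[of I b] Suc.prems by auto
    have "\<forall>i<Suc k. (\<Sum>p\<in>I. c p * b p i) = 0"
    proof (intro allI impI)
      fix i assume "i < Suc k"
      then consider "i < k" | "i = k" by linarith
      then show "(\<Sum>p\<in>I. c p * b p i) = 0"
        by cases (use c True in auto)
    qed
    then show ?thesis using c by blast
  next
    case False
    then obtain p0 where p0: "p0 \<in> I" "b p0 k \<noteq> 0" by blast
    define I' where "I' = I - {p0}"
    have fI': "finite I'" using Suc.prems by (simp add: I'_def)
    have cI': "card I' > k" using Suc.prems p0 by (simp add: I'_def)
    define b' where "b' p i = b p i - (b p k / b p0 k) * b p0 i" for p i
    obtain c' where c': "\<exists>p\<in>I'. c' p \<noteq> 0" "\<forall>i<k. (\<Sum>p\<in>I'. c' p * b' p i) = 0"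
      using Suc.IH[OF fI' cI', of b'] by blast
    define c where "c p = (if p = p0 then - (\<Sum>q\<in>I'. c' q * b q k) / b p0 k else c' p)" for p
    have nz: "\<exists>p\<in>I. c p \<noteq> 0"
    proof -
      obtain p where "p \<in> I'" "c' p \<noteq> 0" using c' by blast
      then show ?thesis by (intro bexI[of _ p]) (auto simp: c_def I'_def)
    qed
    have eq: "(\<Sum>p\<in>I. c p * b p i) = (\<Sum>p\<in>I'. c' p * b' p i)" for i
    proof -
      have "(\<Sum>p\<in>I. c p * b p i) = c p0 * b p0 i + (\<Sum>p\<in>I'. c p * b p i)"
        unfolding I'_def using Suc.prems(1) p0(1) by (simp add: sum.remove)
      also have "(\<Sum>p\<in>I'. c p * b p i) = (\<Sum>p\<in>I'. c' p * b p i)"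
        by (intro sum.cong refl) (simp add: c_def I'_def)
      also have "(\<Sum>p\<in>I'. c' p * b' p i) = (\<Sum>p\<in>I'. c' p * b p i) - (\<Sum>p\<in>I'. c' p * b p k) / b p0 k * b p0 i"
        unfolding b'_def by (simp add: algebra_simps sum_subtractf sum_distrib_left sum_divide_distrib)
      ultimately show ?thesis by (simp add: c_def)
    qed
    have "\<forall>i<Suc k. (\<Sum>p\<in>I. c p * b p i) = 0"
    proof (intro allI impI)
      fix i assume "i < Suc k"
      then consider "i < k" | "i = k" by linarith
      then show "(\<Sum>p\<in>I. c p * b p i) = 0"
      proof cases
        case 1 then show ?thesis using c' eq by simp
      next
        case 2
        have "b' p k = 0" for p using p0(2) by (simp add: b'_def)
        then show ?thesis using 2 eq by simp
      qed
    qed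
    then show ?thesis using nz by blast
  qed
qed

lemma vc_bound:
  fixes \<alpha> :: "'a set \<Rightarrow> nat \<Rightarrow> real" and \<beta> :: "'a \<Rightarrow> nat \<Rightarrow> real"
  assumes fin: "finite I"
    and sh: "\<forall>S\<subseteq>I. \<forall>p\<in>I. ((\<Sum>i<k. \<alpha> S i * \<beta> p i) > 0 \<longleftrightarrow> p \<in> S)"
  shows "card I \<le> k"
proof (rule ccontr)
  assume "\<not> card I \<le> k"
  then have "card I > k" by simp
  from dep[OF fin this, of \<beta>] obtain c0 where c0: "\<exists>p\<in>I. c0 p \<noteq> 0" "\<forall>i<k. (\<Sum>p\<in>I. c0 p * \<beta> p i) = 0"
    by blast
  obtain c where c: "\<exists>p\<in>I. c p > 0" "\<forall>i<k. (\<Sum>p\<in>I. c p * \<beta> p i) = 0"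
  proof (cases "\<exists>p\<in>I. c0 p > 0")
    case True then show ?thesis using that c0 by blast
  next
    case False
    then obtain p where "p \<in> I" "c0 p < 0" using c0(1) by force
    moreover have "\<forall>i<k. (\<Sum>p\<in>I. (- c0 p) * \<beta> p i) = 0"
      using c0(2) by (simp add: sum_negf)
    ultimately show ?thesis using that[of "\<lambda>p. - c0 p"] by force
  qed
  define S where "S = {p\<in>I. c p > 0}"
  have SI: "S \<subseteq> I" by (auto simp: S_def)
  have "(\<Sum>p\<in>I. c p * (\<Sum>i<k. \<alpha> S i * \<beta> p i)) = (\<Sum>i<k. \<alpha> S i * (\<Sum>p\<in>I. c p * \<beta> p i))"
  proof -
    have "(\<Sum>p\<in>I. c p * (\<Sum>i<k. \<alpha> S i * \<beta> p i)) = (\<Sum>p\<in>I. \<Sum>i<k. c p * (\<alpha> S i * \<beta> p i))"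
      by (simp add: sum_distrib_left)
    also have "\<dots> = (\<Sum>i<k. \<Sum>p\<in>I. c p * (\<alpha> S i * \<beta> p i))" by (rule sum.swap)
    also have "\<dots> = (\<Sum>i<k. \<alpha> S i * (\<Sum>p\<in>I. c p * \<beta> p i))"
      by (simp add: sum_distrib_left mult_ac)
    finally show ?thesis .
  qed
  also have "\<dots> = 0" using c(2) by simp
  finally have zero: "(\<Sum>p\<in>I. c p * (\<Sum>i<k. \<alpha> S i * \<beta> p i)) = 0" .
  have nonneg: "\<forall>p\<in>I. 0 \<le> c p * (\<Sum>i<k. \<alpha> S i * \<beta> p i)"
  proof
    fix p assume p: "p \<in> I"
    show "0 \<le> c p * (\<Sum>i<k. \<alpha> S i * \<beta> p i)"
    proof (cases "c p > 0")
      case True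
      then have "p \<in> S" using p by (simp add: S_def)
      then have "(\<Sum>i<k. \<alpha> S i * \<beta> p i) > 0" using sh SI p by blast
      then show ?thesis using True by simp
    next
      case False
      then have "p \<notin> S" by (simp add: S_def)
      then have "\<not> (\<Sum>i<k. \<alpha> S i * \<beta> p i) > 0" using sh SI p by blast
      then show ?thesis using False by (simp add: mult_nonpos_nonpos)
    qed
  qed
  obtain p0 where p0: "p0 \<in> I" "c p0 > 0" using c(1) by blast
  then have "p0 \<in> S" by (simp add: S_def)
  then have "(\<Sum>i<k. \<alpha> S i * \<beta> p0 i) > 0" using sh SI p0 by blast
  then have pos: "0 < c p0 * (\<Sum>i<k. \<alpha> S i * \<beta> p0 i)" using p0 by simp
  have "c p0 * (\<Sum>i<k. \<alpha> S i * \<beta> p0 i) \<le> (\<Sum>p\<in>I. c p * (\<Sum>i<k. \<alpha> S i * \<beta> p i))"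
    by (rule member_le_sum[OF p0(1)]) (use nonneg fin in auto)
  then show False using zero pos by simp
qed

lemma pfa_two:
  assumes "is_pfa k Alph ini T Te F" "x \<in> Alph"
  shows "pfa_prob k ini T Te F [x, y] - \<mu> =
    (\<Sum>i<k. vec_mat k ini (T x) i * ((\<Sum>j\<in>F. \<Sum>l<k. T y i l * Te l j) - \<mu>))"
proof -
  define \<alpha> where "\<alpha> = vec_mat k ini (T x)"
  have finF: "finite F" using assms(1) by (auto simp: is_pfa_def intro: finite_subset)
  have sum1: "(\<Sum>i<k. \<alpha> i) = 1"
  proof -
    have "(\<Sum>i<k. \<alpha> i) = (\<Sum>j<k. ini j * (\<Sum>i<k. T x j i))"
      unfolding \<alpha>_def vec_mat_def sum_distrib_left by (rule sum.swap)
    also have "\<dots> = (\<Sum>j<k. ini j)"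
      using assms by (intro sum.cong refl) (auto simp: is_pfa_def stoch_mat_def stoch_vec_def)
    also have "\<dots> = 1" using assms by (simp add: is_pfa_def stoch_vec_def)
    finally show ?thesis .
  qed
  have "pfa_prob k ini T Te F [x, y] = (\<Sum>j\<in>F. \<Sum>l<k. (\<Sum>i<k. \<alpha> i * T y i l) * Te l j)"
    by (simp add: pfa_prob_def \<alpha>_def vec_mat_def)
  also have "\<dots> = (\<Sum>i<k. \<alpha> i * (\<Sum>j\<in>F. \<Sum>l<k. T y i l * Te l j))"
  proof -
    have "(\<Sum>j\<in>F. \<Sum>l<k. (\<Sum>i<k. \<alpha> i * T y i l) * Te l j) = (\<Sum>j\<in>F. \<Sum>l<k. \<Sum>i<k. \<alpha> i * (T y i l * Te l j))"
      by (simp add: sum_distrib_right mult.assoc)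
    also have "\<dots> = (\<Sum>j\<in>F. \<Sum>i<k. \<Sum>l<k. \<alpha> i * (T y i l * Te l j))"
      by (rule sum.cong[OF refl]) (rule sum.swap)
    also have "\<dots> = (\<Sum>i<k. \<Sum>j\<in>F. \<Sum>l<k. \<alpha> i * (T y i l * Te l j))"
      by (rule sum.swap)
    also have "\<dots> = (\<Sum>i<k. \<alpha> i * (\<Sum>j\<in>F. \<Sum>l<k. T y i l * Te l j))"
      by (simp add: sum_distrib_left)
    finally show ?thesis .
  qed
  finally have "pfa_prob k ini T Te F [x, y] - \<mu> = (\<Sum>i<k. \<alpha> i * (\<Sum>j\<in>F. \<Sum>l<k. T y i l * Te l j)) - \<mu> * (\<Sum>i<k. \<alpha> i)"
    using sum1 by simp
  also have "\<dots> = (\<Sum>i<k. \<alpha> i * ((\<Sum>j\<in>F. \<Sum>l<k. T y i l * Te l j) - \<mu>))"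
    by (simp add: sum_distrib_left algebra_simps sum_subtractf)
  finally show ?thesis unfolding \<alpha>_def .
qed


lemma density_e00: "0 < n \<Longrightarrow> density n e00"
proof -
  assume n0: "0 < n"
  have "psd n e00" unfolding psd_def Let_def
  proof
    fix x :: "nat \<Rightarrow> complex"
    have "(\<Sum>i<n. \<Sum>j<n. cnj (x i) * e00 i j * x j) = cnj (x 0) * x 0"
      by (rule sum_e00[OF n0])
    moreover have "Im (cnj (x 0) * x 0) = 0" "0 \<le> Re (cnj (x 0) * x 0)" by (simp_all add: algebra_simps)
    ultimately show "Im (\<Sum>i<n. \<Sum>j<n. cnj (x i) * e00 i j * x j) = 0 \<and> 0 \<le> Re (\<Sum>i<n. \<Sum>j<n. cnj (x i) * e00 i j * x j)"
      by simp
  qed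
  moreover have "ctrace n e00 = 1"
  proof -
    have "ctrace n e00 = (\<Sum>i<n. if i = 0 then 1 else 0)" unfolding ctrace_def e00_def by (rule sum.cong) auto
    then show ?thesis using n0 by simp
  qed
  ultimately show ?thesis by (simp add: density_def)
qed

lemma projector_e00: "0 < n \<Longrightarrow> projector n e00"
proof -
  assume n0: "0 < n"
  have "hermitian n e00" by (simp add: hermitian_def e00_def)
  moreover have "mat_eq n (cmat_mult n e00 e00) e00"
    unfolding mat_eq_def
  proof (intro allI impI)
    fix i j assume "i < n" "j < n"
    have "cmat_mult n e00 e00 i j = (\<Sum>l<n. if l = 0 then e00 i j else 0)"
      unfolding cmat_mult_def by (rule sum.cong) (auto simp: e00_def)
    then show "cmat_mult n e00 e00 i j = e00 i j" using n0 by simp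
  qed
  ultimately show ?thesis by (simp add: projector_def)
qed

lemma lower:
  assumes n2: "2 \<le> n" and sim: "simulates_all n m"
  shows "(n div 2) * (n - n div 2) \<le> m"
proof -
  have n0: "0 < n" using n2 by simp
  define h where "h = n div 2"
  define I where "I = {..<h} \<times> {h..<n}"
  have finI: "finite I" by (simp add: I_def)
  have cardI: "card I = h * (n - h)" by (simp add: I_def card_cartesian_product)
  obtain g where g: "bij_betw g {0..<card (Pow I)} (Pow I)"
    using ex_bij_betw_nat_finite[of "Pow I"] finI by auto
  define N where "N = n * n"
  define code where "code p = fst p * n + snd p" for p :: "nat \<times> nat"
  define E where "E \<sigma> = (if \<sigma> < N then Esuf n (\<sigma> div n) (\<sigma> mod n) else Epre n (g (\<sigma> - N)))" for \<sigma>
  define Alph where "Alph = code ` I \<union> {N..<N + card (Pow I)}"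
  have pI: "fst p < snd p \<and> snd p < n" if "p \<in> I" for p
    using that unfolding I_def h_def by auto
  have code_props: "code p < N \<and> code p div n = fst p \<and> code p mod n = snd p" if "p \<in> I" for p
  proof -
    have a: "fst p < n" "snd p < n" using pI[OF that] by auto
    have "fst p * n + snd p < fst p * n + n" using a by simp
    also have "\<dots> = (fst p + 1) * n" by simp
    also have "\<dots> \<le> n * n" using a by (intro mult_right_mono) auto
    finally have "code p < N" by (simp add: code_def N_def)
    moreover have "code p div n = fst p" "code p mod n = snd p" using a by (simp_all add: code_def)
    ultimately show ?thesis by simp
  qed
  have gq: "is_gqfa n Alph e00 E e00"
  proof -
    have "cptp n (E \<sigma>)" if "\<sigma> \<in> Alph" for \<sigma>
    proof (cases "\<sigma> < N")
      case True
      then have "\<sigma> \<in> code ` I" using that unfolding Alph_def by auto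
      then obtain p where p: "p \<in> I" "\<sigma> = code p" by blast
      have "cptp n (Esuf n (fst p) (snd p))"
        using pI[OF p(1)] n2 by (intro Esuf_cptp) auto
      then show ?thesis using True code_props[OF p(1)] p by (simp add: E_def)
    next
      case False
      then show ?thesis using Epre_cptp[OF n0] by (simp add: E_def)
    qed
    then show ?thesis using density_e00[OF n0] projector_e00[OF n0] by (simp add: is_gqfa_def)
  qed
  have lam: "0 \<le> 1 / real n" "1 / real n < 1" using n2 by auto
  have finA: "finite Alph" using finI by (simp add: Alph_def)
  obtain k ini T Te F \<mu> where P: "k \<le> m" "is_pfa k Alph ini T Te F" "0 \<le> \<mu>" "\<mu> < 1"
      "pfa_lang k Alph ini T Te F \<mu> = gqfa_lang n Alph e00 E e00 (1 / real n)"
    using sim[unfolded simulates_all_def, rule_format, of Alph e00 E e00 "1 / real n"] finA gq lam by blast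
  have pre: "\<exists>\<sigma>. \<sigma> \<in> Alph \<and> N \<le> \<sigma> \<and> g (\<sigma> - N) = S" if "S \<subseteq> I" for S
  proof -
    have "S \<in> g ` {0..<card (Pow I)}" using g that by (simp add: bij_betw_def)
    then obtain t where t: "t < card (Pow I)" "g t = S" by auto
    then show ?thesis by (intro exI[of _ "N + t"]) (auto simp: Alph_def)
  qed
  define \<sigma>of where "\<sigma>of S = (SOME \<sigma>. \<sigma> \<in> Alph \<and> N \<le> \<sigma> \<and> g (\<sigma> - N) = S)" for S
  have \<sigma>of: "\<sigma>of S \<in> Alph \<and> N \<le> \<sigma>of S \<and> g (\<sigma>of S - N) = S" if "S \<subseteq> I" for S
    unfolding \<sigma>of_def by (rule someI_ex[OF pre[OF that]])
  define \<beta> where "\<beta> p i = (\<Sum>j\<in>F. \<Sum>l<k. T (code p) i l * Te l j) - \<mu>" for p i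
  define \<alpha> where "\<alpha> S = vec_mat k ini (T (\<sigma>of S))" for S
  have sh: "\<forall>S\<subseteq>I. \<forall>p\<in>I. ((\<Sum>i<k. \<alpha> S i * \<beta> p i) > 0 \<longleftrightarrow> p \<in> S)"
  proof (intro allI impI ballI)
    fix S p assume S: "S \<subseteq> I" and p: "p \<in> I"
    let ?w = "[\<sigma>of S, code p]"
    have wA: "set ?w \<subseteq> Alph" using \<sigma>of[OF S] p by (auto simp: Alph_def)
    have E1: "E (\<sigma>of S) = Epre n S" using \<sigma>of[OF S] by (simp add: E_def)
    have E2: "E (code p) = Esuf n (fst p) (snd p)" using code_props[OF p] by (simp add: E_def)
    have gv: "gqfa_prob n e00 E e00 ?w = (real n + (if p \<in> S then 1 else -1)) / (real n)^2"
    proof -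
      have "gqfa_prob n e00 E e00 ?w = Re (ctrace n (cmat_mult n e00 (Esuf n (fst p) (snd p) (Epre n S e00))))"
        by (simp add: gqfa_prob_def E1 E2)
      also have "\<dots> = (real n + (if (fst p, snd p) \<in> S then 1 else -1)) / (real n)^2"
        using pI[OF p] n2 by (intro accept_val) auto
      finally show ?thesis by simp
    qed
    have "gqfa_prob n e00 E e00 ?w > 1 / real n \<longleftrightarrow> p \<in> S"
    proof -
      have rn: "real n > 0" using n0 by simp
      have "1 / real n = real n / (real n)^2" using rn by (simp add: power2_eq_square)
      then have "gqfa_prob n e00 E e00 ?w > 1 / real n \<longleftrightarrow> real n + (if p \<in> S then 1 else -1) > real n"
      proof -
        have dv: "x / d > y / d \<longleftrightarrow> x > y" if "d > 0" for x y d :: real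
          using that divide_strict_right_mono[of y x d] divide_right_mono[of x y d] by linarith
        have "(real n)^2 > 0" using rn by simp
        from dv[OF this] show ?thesis unfolding gv \<open>1 / real n = real n / (real n)^2\<close> .
      qed
      then show ?thesis by auto
    qed
    then have "?w \<in> gqfa_lang n Alph e00 E e00 (1 / real n) \<longleftrightarrow> p \<in> S"
      using wA by (simp add: gqfa_lang_def)
    then have "?w \<in> pfa_lang k Alph ini T Te F \<mu> \<longleftrightarrow> p \<in> S"
      by (simp only: P(5))
    then have "pfa_prob k ini T Te F ?w > \<mu> \<longleftrightarrow> p \<in> S"
      using wA unfolding pfa_lang_def by simp
    moreover have "pfa_prob k ini T Te F ?w - \<mu> = (\<Sum>i<k. \<alpha> S i * \<beta> p i)"
      unfolding \<alpha>_def \<beta>_def by (rule pfa_two[OF P(2)]) (use \<sigma>of[OF S] in simp)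
    ultimately show "(\<Sum>i<k. \<alpha> S i * \<beta> p i) > 0 \<longleftrightarrow> p \<in> S" by linarith
  qed
  have "card I \<le> k" by (rule vc_bound[OF finI sh])
  then show ?thesis using P(1) cardI h_def by simp
qed



lemma nn_bound:
  fixes n :: nat
  assumes "2 \<le> n"
  shows "n * n \<le> 8 * ((n div 2) * (n - n div 2))"
proof -
  have a: "n \<le> 4 * (n div 2)" using assms by linarith
  have b: "n \<le> 2 * (n - n div 2)" by linarith
  have "n * n \<le> (4 * (n div 2)) * (2 * (n - n div 2))" using mult_le_mono[OF a b] .
  also have "\<dots> = 8 * ((n div 2) * (n - n div 2))" by simp
  finally show ?thesis .
qed

theorem corollary4p2:
  shows "(\<forall>n\<ge>1. \<exists>m. simulates_all n m) \<and>
         (\<lambda>n. real (s_cost n)) \<in> \<Theta>(\<lambda>n. real n ^ 2)"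
proof
  show "\<forall>n\<ge>1. \<exists>m. simulates_all n m" using upper by blast
  have ev: "\<forall>n\<ge>2. 1/8 * norm (real n ^ 2) \<le> norm (real (s_cost n)) \<and> norm (real (s_cost n)) \<le> 4 * norm (real n ^ 2)"
  proof (intro allI impI)
    fix n :: nat assume n2: "2 \<le> n"
    have up: "s_cost n \<le> 2 * (n * n) + 2" unfolding s_cost_def by (rule Least_le) (rule upper)
    have "simulates_all n (s_cost n)" unfolding s_cost_def by (rule LeastI) (rule upper)
    then have lo: "(n div 2) * (n - n div 2) \<le> s_cost n" by (rule lower[OF n2])
    have lo2: "n * n \<le> 8 * s_cost n" using nn_bound[OF n2] lo by linarith
    have up2: "s_cost n \<le> 4 * (n * n)"
    proof -
      have "2 \<le> 2 * (n * n)" using n2 by (simp add: mult_le_mono)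
      then show ?thesis using up by linarith
    qed
    have "real (n * n) \<le> real (8 * s_cost n)" using lo2 by (simp only: of_nat_le_iff)
    then have r1: "1/8 * (real n ^ 2) \<le> real (s_cost n)" by (simp add: power2_eq_square)
    have "real (s_cost n) \<le> real (4 * (n * n))" using up2 by (simp only: of_nat_le_iff)
    then have r2: "real (s_cost n) \<le> 4 * (real n ^ 2)" by (simp add: power2_eq_square)
    show "1/8 * norm (real n ^ 2) \<le> norm (real (s_cost n)) \<and> norm (real (s_cost n)) \<le> 4 * norm (real n ^ 2)"
      using r1 r2 by simp
  qed
  show "(\<lambda>n. real (s_cost n)) \<in> \<Theta>(\<lambda>n. real n ^ 2)"
    by (rule bigthetaI'[of "1/8" 4]) (use ev in \<open>auto simp: eventually_at_top_linorder\<close>)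
qed

end
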